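(* Let $\Omega$ be a verification operator for $|\Psi\rangle$, $N\ge1$ an integer, and $\delta_{\mathrm c}$ as defined in the context. Then: (1) $\zeta(N,\delta,\Omega)$ is convex and nondecreasing in $\delta$ for $0\le\delta\le1$ and strictly increasing for $\delta_{\mathrm c}\le\delta\le1$; (2) $\eta(N,f,\Omega)$ is concave and strictly increasing in $f$ for $0\le f\le1$; (3) $F(N,\delta,\Omega)$ is nondecreasing in $\delta$ for $0<\delta\le1$ and strictly increasing for $\delta_{\mathrm c}\le\delta\le1$; (4) $\mathcal F(N,f,\Omega)$ is strictly increasing in $f$ for $0<f\le1$.
   Context: Let $\mathcal H$ be a Hilbert space of finite dimension $D\ge2$ and $|\Psi\rangle\in\mathcal H$ a unit vector. A verification operator for $|\Psi\rangle$ is a Hermitian operator $\Omega$ on $\mathcal H$ with $0\le\Omega\le1$, $\Omega|\Psi\rangle=|\Psi\rangle$, whose eigenvalue $1$ is nondegenerate; $\beta$ and $\tau$ denote its second largest and smallest eigenvalues. Let $\delta_{\mathrm c}=\beta^N$ if $\tau>0$ and $\delta_{\mathrm c}=\max\{\beta^N,1/(N+1)\}$ if $\tau=0$. For a density operator $\rho$ on $\mathcal H^{\otimes(N+1)}$ put $p_\rho=\mathrm{tr}[(\Omega^{\otimes N}\otimes1)\rho]$, $f_\rho=\mathrm{tr}[(\Omega^{\otimes N}\otimes|\Psi\rangle\langle\Psi|)\rho]$. With optimization over permutation-invariant density operators on $\mathcal H^{\otimes(N+1)}$: $\zeta(N,\delta,\Omega)=\min\{f_\rho:p_\rho\ge\delta\}$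 ($0\le\delta\le1$), $\eta(N,f,\Omega)=\max\{p_\rho:f_\rho\le f\}$ ($0\le f\le1$), $F(N,\delta,\Omega)=\min\{f_\rho/p_\rho:p_\rho\ge\delta\}$ ($0<\delta\le1$), $\mathcal F(N,f,\Omega)=\min\{f_\rho/p_\rho:f_\rho\ge f\}$ ($0<f\le1$). *)

theory Defs
  imports "HOL-Analysis.Convex" "Jordan_Normal_Form.Char_Poly" "HOL-Combinatorics.Permutations"
begin

definition qform :: "complex mat \<Rightarrow> complex vec \<Rightarrow> complex" where
  "qform A v = (\<Sum>i<dim_vec v. \<Sum>j<dim_vec v. cnj (vec_index v i) * index_mat A (i, j) * vec_index v j)"

definition is_unit_vec :: "nat \<Rightarrow> complex vec \<Rightarrow> bool" where
  "is_unit_vec D v \<longleftrightarrow> v \<in> carrier_vec D \<and> (\<Sum>i<D. (cmod (vec_index v i))\<^sup>2) = 1"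

definition hermitian_mat :: "nat \<Rightarrow> complex mat \<Rightarrow> bool" where
  "hermitian_mat D A \<longleftrightarrow> A \<in> carrier_mat D D \<and>
     (\<forall>i<D. \<forall>j<D. index_mat A (j, i) = cnj (index_mat A (i, j)))"

definition verification_operator :: "nat \<Rightarrow> complex mat \<Rightarrow> complex vec \<Rightarrow> bool" where
  "verification_operator D \<Omega> \<Psi> \<longleftrightarrow>
     hermitian_mat D \<Omega> \<and>
     (\<forall>v \<in> carrier_vec D. 0 \<le> Re (qform \<Omega> v) \<and> Re (qform \<Omega> v) \<le> Re (qform (1\<^sub>m D) v)) \<and>
     \<Omega> *\<^sub>v \<Psi> = \<Psi> \<and>
     (\<forall>v \<in> carrier_vec D. \<Omega> *\<^sub>v v = v \<longrightarrow> (\<exists>c. v = c \<cdot>\<^sub>v \<Psi>))"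

definition beta_ev :: "complex mat \<Rightarrow> real" where
  "beta_ev \<Omega> = Max (Re ` {k. eigenvalue \<Omega> k \<and> k \<noteq> 1})"

definition tau_ev :: "complex mat \<Rightarrow> real" where
  "tau_ev \<Omega> = Min (Re ` {k. eigenvalue \<Omega> k})"

definition delta_c :: "nat \<Rightarrow> complex mat \<Rightarrow> real" where
  "delta_c N \<Omega> = (if tau_ev \<Omega> > 0 then beta_ev \<Omega> ^ N
                    else max (beta_ev \<Omega> ^ N) (1 / real (N + 1)))"

text \<open>The tensor power H^{\<otimes> n}: basis indexed by lists of length n with entries < D;
operators on it are kernels on these index lists.\<close>
definition idx :: "nat \<Rightarrow> nat \<Rightarrow> nat list set" where
  "idx n D = {xs. length xs = n \<and> set xs \<subseteq> {..<D}}"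

type_synonym op_n = "nat list \<Rightarrow> nat list \<Rightarrow> complex"

definition density_op :: "nat \<Rightarrow> nat \<Rightarrow> op_n \<Rightarrow> bool" where
  "density_op n D \<rho> \<longleftrightarrow>
     (\<forall>xs\<in>idx n D. \<forall>ys\<in>idx n D. \<rho> ys xs = cnj (\<rho> xs ys)) \<and>
     (\<forall>v :: nat list \<Rightarrow> complex.
        0 \<le> Re (\<Sum>xs\<in>idx n D. \<Sum>ys\<in>idx n D. cnj (v xs) * \<rho> xs ys * v ys)) \<and>
     (\<Sum>xs\<in>idx n D. \<rho> xs xs) = 1"

definition perm_idx :: "(nat \<Rightarrow> nat) \<Rightarrow> nat list \<Rightarrow> nat list" where
  "perm_idx \<sigma> xs = map (\<lambda>i. xs ! \<sigma> i) [0..<length xs]"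

definition perm_invariant :: "nat \<Rightarrow> nat \<Rightarrow> op_n \<Rightarrow> bool" where
  "perm_invariant n D \<rho> \<longleftrightarrow>
     (\<forall>\<sigma>. \<sigma> permutes {..<n} \<longrightarrow>
        (\<forall>xs\<in>idx n D. \<forall>ys\<in>idx n D. \<rho> (perm_idx \<sigma> xs) (perm_idx \<sigma> ys) = \<rho> xs ys))"

definition PI_states :: "nat \<Rightarrow> nat \<Rightarrow> op_n set" where
  "PI_states n D = {\<rho>. density_op n D \<rho> \<and> perm_invariant n D \<rho>}"

text \<open>Kernel of Omega^{\<otimes> N} \<otimes> B on H^{\<otimes>(N+1)}.\<close>
definition tensor_last :: "nat \<Rightarrow> complex mat \<Rightarrow> complex mat \<Rightarrow> op_n" where
  "tensor_last N \<Omega> B xs ys =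
     (\<Prod>i<N. index_mat \<Omega> (xs ! i, ys ! i)) * index_mat B (xs ! N, ys ! N)"

definition trace_prod :: "nat \<Rightarrow> nat \<Rightarrow> op_n \<Rightarrow> op_n \<Rightarrow> complex" where
  "trace_prod n D A \<rho> = (\<Sum>xs\<in>idx n D. \<Sum>ys\<in>idx n D. A xs ys * \<rho> ys xs)"

definition proj :: "complex vec \<Rightarrow> complex mat" where
  "proj \<Psi> = mat (dim_vec \<Psi>) (dim_vec \<Psi>) (\<lambda>(i, j). vec_index \<Psi> i * cnj (vec_index \<Psi> j))"

definition p_val :: "nat \<Rightarrow> complex mat \<Rightarrow> complex vec \<Rightarrow> op_n \<Rightarrow> real" where
  "p_val N \<Omega> \<Psi> \<rho> =
     Re (trace_prod (N + 1) (dim_vec \<Psi>) (tensor_last N \<Omega> (1\<^sub>m (dim_vec \<Psi>))) \<rho>)"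

definition f_val :: "nat \<Rightarrow> complex mat \<Rightarrow> complex vec \<Rightarrow> op_n \<Rightarrow> real" where
  "f_val N \<Omega> \<Psi> \<rho> = Re (trace_prod (N + 1) (dim_vec \<Psi>) (tensor_last N \<Omega> (proj \<Psi>)) \<rho>)"

definition zeta :: "nat \<Rightarrow> real \<Rightarrow> complex mat \<Rightarrow> complex vec \<Rightarrow> real" where
  "zeta N \<delta> \<Omega> \<Psi> = Inf {f_val N \<Omega> \<Psi> \<rho> | \<rho>. \<rho> \<in> PI_states (N + 1) (dim_vec \<Psi>) \<and> p_val N \<Omega> \<Psi> \<rho> \<ge> \<delta>}"

definition eta :: "nat \<Rightarrow> real \<Rightarrow> complex mat \<Rightarrow> complex vec \<Rightarrow> real" where
  "eta N f \<Omega> \<Psi> = Sup {p_val N \<Omega> \<Psi> \<rho> | \<rho>. \<rho> \<in> PI_states (N + 1) (dim_vec \<Psi>) \<and> f_val N \<Omega> \<Psi> \<rho> \<le> f}"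

definition Fid :: "nat \<Rightarrow> real \<Rightarrow> complex mat \<Rightarrow> complex vec \<Rightarrow> real" where
  "Fid N \<delta> \<Omega> \<Psi> = Inf {f_val N \<Omega> \<Psi> \<rho> / p_val N \<Omega> \<Psi> \<rho> | \<rho>. \<rho> \<in> PI_states (N + 1) (dim_vec \<Psi>) \<and> p_val N \<Omega> \<Psi> \<rho> \<ge> \<delta>}"

definition Fid' :: "nat \<Rightarrow> real \<Rightarrow> complex mat \<Rightarrow> complex vec \<Rightarrow> real" where
  "Fid' N f \<Omega> \<Psi> = Inf {f_val N \<Omega> \<Psi> \<rho> / p_val N \<Omega> \<Psi> \<rho> | \<rho>. \<rho> \<in> PI_states (N + 1) (dim_vec \<Psi>) \<and> f_val N \<Omega> \<Psi> \<rho> \<ge> f}"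

end

theory Submission
  imports Defs
begin


locale absK =
  fixes S :: "'a set" and p f :: "'a \<Rightarrow> real" and dc C C' :: real and x0 x1 :: 'a
  assumes mix: "\<And>x y t. x\<in>S \<Longrightarrow> y\<in>S \<Longrightarrow> 0\<le>t \<Longrightarrow> t\<le>1 \<Longrightarrow>
      \<exists>z\<in>S. p z = t*p x + (1-t)*p y \<and> f z = t*f x + (1-t)*f y"
  and bnd: "\<And>x. x\<in>S \<Longrightarrow> 0 \<le> f x \<and> f x \<le> p x \<and> p x \<le> 1"
  and x1: "x1\<in>S" "p x1 = 1" "f x1 = 1"
  and x0: "x0\<in>S" "p x0 = dc" "f x0 = 0"
  and dcpos: "dc > 0"
  and Cpos: "C > 0" and Ebd: "\<And>x. x\<in>S \<Longrightarrow> p x \<le> dc + C * f x"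
  and C'pos: "C' > 0" and Fbd: "\<And>x. x\<in>S \<Longrightarrow> 1 - f x \<le> C' * (1 - p x)"
begin

definition "g \<delta> = Inf {f x |x. x\<in>S \<and> p x \<ge> \<delta>}"
definition "h a = Sup {p x |x. x\<in>S \<and> f x \<le> a}"
definition "R \<delta> = Inf {f x / p x |x. x\<in>S \<and> p x \<ge> \<delta>}"
definition "R' a = Inf {f x / p x |x. x\<in>S \<and> f x \<ge> a}"

lemma dc_le1: "dc \<le> 1" using bnd[OF x0(1)] x0 by auto

lemma g_lower: "x\<in>S \<Longrightarrow> p x \<ge> \<delta> \<Longrightarrow> g \<delta> \<le> f x"
  unfolding g_def by (rule cInf_lower) (auto intro!: bdd_belowI[of _ 0] dest: bnd)

lemma g_greatest: "\<delta> \<le> 1 \<Longrightarrow> (\<And>x. x\<in>S \<Longrightarrow> p x \<ge> \<delta> \<Longrightarrow> c \<le> f x) \<Longrightarrow> c \<le> g \<delta>"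
  unfolding g_def by (rule cInf_greatest) (use x1 in auto)

lemma g_approx: assumes "\<delta> \<le> 1" "e > 0" shows "\<exists>x\<in>S. p x \<ge> \<delta> \<and> f x < g \<delta> + e"
proof -
  have "{f x |x. x\<in>S \<and> p x \<ge> \<delta>} \<noteq> {}" using x1 assms by auto
  from cInf_lessD[OF this, of "g \<delta> + e"] show ?thesis using assms unfolding g_def by auto
qed

lemma g_nonneg: "\<delta> \<le> 1 \<Longrightarrow> 0 \<le> g \<delta>"
  by (rule g_greatest) (auto dest: bnd)

lemma g_dc: "g dc = 0"
  using g_lower[OF x0(1), of dc] x0 g_nonneg[OF dc_le1] by auto

lemma g_0: "g 0 = 0"
  using g_lower[OF x0(1), of 0] x0 dcpos g_nonneg[of 0] by auto

lemma g_conv: assumes "a \<le> 1" "b \<le> 1" "0 \<le> u" "u \<le> 1"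
  shows "g (u*a + (1-u)*b) \<le> u * g a + (1-u) * g b"
proof (rule field_le_epsilon)
  fix e :: real assume e: "e > 0"
  obtain x where x: "x\<in>S" "p x \<ge> a" "f x < g a + e" using g_approx[OF assms(1) e] by auto
  obtain y where y: "y\<in>S" "p y \<ge> b" "f y < g b + e" using g_approx[OF assms(2) e] by auto
  obtain z where z: "z\<in>S" "p z = u*p x + (1-u)*p y" "f z = u*f x + (1-u)*f y"
    using mix[OF x(1) y(1) assms(3,4)] by auto
  have "u*a + (1-u)*b \<le> p z" unfolding z(2) using x y assms
    by (intro add_mono mult_left_mono) auto
  hence "g (u*a + (1-u)*b) \<le> f z" by (rule g_lower[OF z(1)])
  also have "\<dots> \<le> u*(g a + e) + (1-u)*(g b + e)" unfolding z(3) using x y assms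
    by (intro add_mono mult_left_mono) auto
  finally show "g (u*a + (1-u)*b) \<le> u * g a + (1-u) * g b + e" by (simp add: algebra_simps)
qed

lemma g_mono: "a \<le> b \<Longrightarrow> b \<le> 1 \<Longrightarrow> g a \<le> g b"
  by (rule g_greatest) (auto intro: g_lower)

lemma g_pos: assumes "dc < b" "b \<le> 1" shows "0 < g b"
proof -
  have "(b - dc)/C \<le> g b"
  proof (rule g_greatest[OF assms(2)])
    fix x assume "x\<in>S" "b \<le> p x"
    with Ebd[of x] Cpos show "(b - dc)/C \<le> f x" by (simp add: field_simps)
  qed
  moreover have "0 < (b - dc)/C" using assms Cpos by simp
  ultimately show ?thesis by linarith
qed

lemma g_ratio: assumes "0 < a" "a \<le> b" "b \<le> 1" shows "g a \<le> (a/b) * g b"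
proof -
  have "g ((a/b)*b + (1-a/b)*0) \<le> (a/b) * g b + (1-a/b) * g 0"
    using assms by (intro g_conv) auto
  thus ?thesis using assms by (simp add: g_0)
qed

lemma g_ratio2: assumes "dc \<le> a" "a < b" "b \<le> 1" shows "g a \<le> ((a-dc)/(b-dc)) * g b"
proof -
  have "g (((a-dc)/(b-dc))*b + (1-(a-dc)/(b-dc))*dc) \<le> ((a-dc)/(b-dc)) * g b + (1-(a-dc)/(b-dc)) * g dc"
    using assms dc_le1 by (intro g_conv) (auto simp: field_simps)
  moreover have "((a-dc)/(b-dc))*b + (1-(a-dc)/(b-dc))*dc = a"
  proof -
    have ne: "b - dc \<noteq> 0" using assms by simp
    define k where "k = (a-dc)/(b-dc)"
    have "k*(b-dc) = a - dc" using ne unfolding k_def by simp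
    hence "k*b + (1-k)*dc = a" by (simp add: algebra_simps)
    thus ?thesis unfolding k_def .
  qed
  ultimately show ?thesis by (simp add: g_dc)
qed

lemma R_eq: assumes "0 < \<delta>" "\<delta> \<le> 1" shows "R \<delta> = g \<delta> / \<delta>"
proof (rule antisym)
  have ne: "{f x / p x |x. x\<in>S \<and> p x \<ge> \<delta>} \<noteq> {}" using x1 assms by auto
  have bb: "bdd_below {f x / p x |x. x\<in>S \<and> p x \<ge> \<delta>}"
    by (rule bdd_belowI[of _ 0]) (auto dest: bnd)
  show "g \<delta> / \<delta> \<le> R \<delta>" unfolding R_def
  proof (rule cInf_greatest[OF ne], clarify)
    fix x assume x: "x\<in>S" "\<delta> \<le> p x"
    have px: "0 < p x" "p x \<le> 1" using x assms bnd[OF x(1)] by auto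
    have "g \<delta> \<le> (\<delta>/p x) * g (p x)" using g_ratio[OF assms(1) x(2) px(2)] .
    also have "\<dots> \<le> (\<delta>/p x) * f x" using g_lower[OF x(1), of "p x"] assms px
      by (intro mult_left_mono) auto
    finally show "g \<delta> / \<delta> \<le> f x / p x" using assms px by (simp add: field_simps)
  qed
  show "R \<delta> \<le> g \<delta> / \<delta>"
  proof (rule field_le_epsilon)
    fix e :: real assume e: "e > 0"
    obtain x where x: "x\<in>S" "p x \<ge> \<delta>" "f x < g \<delta> + e*\<delta>"
      using g_approx[OF assms(2), of "e*\<delta>"] e assms by auto
    have "R \<delta> \<le> f x / p x" unfolding R_def by (rule cInf_lower[OF _ bb]) (use x in auto)
    also have "\<dots> \<le> f x / \<delta>" using x assms bnd[OF x(1)] by (intro divide_left_mono) auto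
    also have "\<dots> \<le> (g \<delta> + e*\<delta>) / \<delta>" using x assms by (intro divide_right_mono) auto
    also have "\<dots> = g \<delta> / \<delta> + e" using assms by (simp add: field_simps)
    finally show "R \<delta> \<le> g \<delta> / \<delta> + e" .
  qed
qed

lemma h_upper: "x\<in>S \<Longrightarrow> f x \<le> a \<Longrightarrow> p x \<le> h a"
  unfolding h_def by (rule cSup_upper) (auto intro!: bdd_aboveI[of _ 1] dest: bnd)

lemma h_least: "0 \<le> a \<Longrightarrow> (\<And>x. x\<in>S \<Longrightarrow> f x \<le> a \<Longrightarrow> p x \<le> c) \<Longrightarrow> h a \<le> c"
  unfolding h_def by (rule cSup_least) (use x0 in auto)

lemma h_approx: assumes "0 \<le> a" "e > 0" shows "\<exists>x\<in>S. f x \<le> a \<and> h a - e < p x"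
proof -
  have "{p x |x. x\<in>S \<and> f x \<le> a} \<noteq> {}" using x0 assms by auto
  from less_cSupD[OF this, of "h a - e"] show ?thesis using assms unfolding h_def by auto
qed

lemma h_0: "dc \<le> h 0" using h_upper[OF x0(1)] x0 by auto
lemma h_le1: "0 \<le> a \<Longrightarrow> h a \<le> 1" by (rule h_least) (auto dest: bnd)
lemma h_1: "h 1 = 1" using h_upper[OF x1(1), of 1] x1 h_le1[of 1] by auto
lemma h_mono: "0 \<le> a \<Longrightarrow> a \<le> b \<Longrightarrow> h a \<le> h b"
  by (rule h_least) (auto intro: h_upper)
lemma h_pos: "0 \<le> a \<Longrightarrow> 0 < h a" using h_0 h_mono[of 0 a] dcpos by auto

lemma h_lt1: assumes "0 \<le> a" "a < 1" shows "h a < 1"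
proof -
  have "h a \<le> 1 - (1-a)/C'"
  proof (rule h_least[OF assms(1)])
    fix x assume "x\<in>S" "f x \<le> a"
    with Fbd[of x] C'pos show "p x \<le> 1 - (1-a)/C'" by (simp add: field_simps)
  qed
  moreover have "0 < (1-a)/C'" using assms C'pos by simp
  ultimately show ?thesis by linarith
qed

lemma h_conc: assumes "0 \<le> a" "0 \<le> b" "0 \<le> u" "u \<le> 1"
  shows "u * h a + (1-u) * h b \<le> h (u*a + (1-u)*b)"
proof (rule field_le_epsilon)
  fix e :: real assume e: "e > 0"
  obtain x where x: "x\<in>S" "f x \<le> a" "h a - e < p x" using h_approx[OF assms(1) e] by auto
  obtain y where y: "y\<in>S" "f y \<le> b" "h b - e < p y" using h_approx[OF assms(2) e] by auto
  obtain z where z: "z\<in>S" "p z = u*p x + (1-u)*p y" "f z = u*f x + (1-u)*f y"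
    using mix[OF x(1) y(1) assms(3,4)] by auto
  have "f z \<le> u*a + (1-u)*b" unfolding z(3) using x y assms
    by (intro add_mono mult_left_mono) auto
  hence "p z \<le> h (u*a + (1-u)*b)" by (rule h_upper[OF z(1)])
  moreover have "u*(h a - e) + (1-u)*(h b - e) \<le> p z" unfolding z(2) using x y assms
    by (intro add_mono mult_left_mono) auto
  ultimately show "u * h a + (1-u) * h b \<le> h (u*a + (1-u)*b) + e" by (simp add: algebra_simps)
qed

lemma h_ratio: assumes "0 < a" "a \<le> b" shows "(a/b) * h b + (1-a/b) * h 0 \<le> h a"
proof -
  have "(a/b) * h b + (1-a/b) * h 0 \<le> h ((a/b)*b + (1-a/b)*0)"
    using assms by (intro h_conc) auto
  thus ?thesis using assms by simp
qed

lemma R'_eq: assumes "0 < a" "a \<le> 1" shows "R' a = a / h a"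
proof (rule antisym)
  have ne: "{f x / p x |x. x\<in>S \<and> f x \<ge> a} \<noteq> {}" using x1 assms by auto
  have bb: "bdd_below {f x / p x |x. x\<in>S \<and> f x \<ge> a}"
    by (rule bdd_belowI[of _ 0]) (auto dest: bnd)
  have ha: "0 < h a" using h_pos assms by auto
  show "a / h a \<le> R' a" unfolding R'_def
  proof (rule cInf_greatest[OF ne], clarify)
    fix x assume x: "x\<in>S" "a \<le> f x"
    have fx: "0 < f x" "f x \<le> p x" "p x \<le> 1" using x assms bnd[OF x(1)] by auto
    have hx: "p x \<le> h (f x)" by (rule h_upper[OF x(1)]) simp
    have "(a/f x) * h (f x) + (1-a/f x) * h 0 \<le> h a" using h_ratio[OF assms(1) x(2)] .
    moreover have "0 \<le> (1-a/f x) * h 0" using x fx h_0 dcpos by (intro mult_nonneg_nonneg) auto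
    ultimately have "(a/f x) * h (f x) \<le> h a" by linarith
    hence "(a/f x) * p x \<le> h a" using hx fx assms
      by (meson dual_order.trans divide_nonneg_pos less_eq_real_def mult_left_mono)
    thus "a / h a \<le> f x / p x" using fx ha assms by (simp add: field_simps)
  qed
  show "R' a \<le> a / h a"
  proof (rule ccontr)
    assume "\<not> R' a \<le> a / h a"
    hence lt: "a / h a < R' a" by simp
    define q where "q = (a / R' a + h a)/2"
    have Rpos: "0 < R' a" using lt ha assms by (smt (verit) divide_pos_pos)
    have q1: "a / R' a < q" "q < h a" using lt Rpos ha assms unfolding q_def by (auto simp: field_simps)
    have q0: "0 < q" using q1 Rpos assms by (smt (verit) divide_pos_pos)
    obtain x where x: "x\<in>S" "f x \<le> a" "q < p x" using h_approx[of a "h a - q"] assms q1 by auto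
    have bx: "0 \<le> f x" "f x \<le> p x" "p x \<le> 1" using bnd[OF x(1)] by auto
    have "\<exists>z\<in>S. f z = a \<and> p z \<ge> p x"
    proof (cases "f x = 1")
      case True thus ?thesis using x assms by (intro bexI[of _ x]) auto
    next
      case False
      hence fx1: "f x < 1" using bx x assms by auto
      define t where "t = (1-a)/(1-f x)"
      have t: "0 \<le> t" "t \<le> 1" using fx1 x assms unfolding t_def by (auto simp: field_simps)
      obtain z where z: "z\<in>S" "p z = t*p x + (1-t)*p x1" "f z = t*f x + (1-t)*f x1"
        using mix[OF x(1) x1(1) t] by auto
      have "t*(1 - f x) = 1 - a" unfolding t_def using fx1 by simp
      hence "f z = a" unfolding z(3) x1 by (simp add: algebra_simps)
      moreover have "p z \<ge> p x"
      proof -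
        have "(1-t)*(1 - p x) \<ge> 0" using t bx by (intro mult_nonneg_nonneg) auto
        moreover have "t*p x + (1-t)*1 - p x = (1-t)*(1 - p x)" by (simp add: algebra_simps)
        ultimately show ?thesis unfolding z(2) x1 by linarith
      qed
      ultimately show ?thesis using z(1) by auto
    qed
    then obtain z where z: "z\<in>S" "f z = a" "p z \<ge> p x" by auto
    have "R' a \<le> f z / p z" unfolding R'_def by (rule cInf_lower[OF _ bb]) (use z in auto)
    also have "\<dots> = a / p z" using z by simp
    also have "\<dots> \<le> a / q" using z x q0 assms by (intro divide_left_mono) auto
    also have "\<dots> < R' a" using q1 Rpos q0 assms by (simp add: field_simps)
    finally show False by simp
  qed
qed

theorem main_abs:
  shows "convex_on {0..1} g \<and> mono_on {0..1} g \<and> strict_mono_on {dc..1} g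
       \<and> concave_on {0..1} h \<and> strict_mono_on {0..1} h
       \<and> mono_on {0<..1} R \<and> strict_mono_on {dc..1} R \<and> strict_mono_on {0<..1} R'"
proof (intro conjI)
  show "convex_on {0..1} g" unfolding convex_on_def
  proof (intro conjI ballI allI impI)
    fix x y u v :: real assume xy: "x \<in> {0..1}" "y \<in> {0..1}" and uv: "0 \<le> u" "0 \<le> v" "u + v = 1"
    have "v = 1 - u" "u \<le> 1" using uv by simp_all
    then show "g (u *\<^sub>R x + v *\<^sub>R y) \<le> u * g x + v * g y" using g_conv[of x y u] xy uv(1) by simp
  qed (simp add: convex_real_interval)
  show "mono_on {0..1} g" unfolding mono_on_def using g_mono by auto
  show "strict_mono_on {dc..1} g" unfolding strict_mono_on_def
  proof (intro allI impI)
    fix a b :: real assume ab: "a \<in> {dc..1} \<and> b \<in> {dc..1} \<and> a < b"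
    have "g a \<le> ((a-dc)/(b-dc)) * g b" using g_ratio2 ab by auto
    moreover have "((a-dc)/(b-dc)) * g b < 1 * g b" using g_pos[of b] ab
      by (intro mult_strict_right_mono) (auto simp: field_simps)
    ultimately show "g a < g b" by simp
  qed
  show "concave_on {0..1} h" unfolding concave_on_def convex_on_def
  proof (intro conjI ballI allI impI)
    fix x y u v :: real assume xy: "x \<in> {0..1}" "y \<in> {0..1}" and uv: "0 \<le> u" "0 \<le> v" "u + v = 1"
    have "v = 1 - u" "u \<le> 1" using uv by simp_all
    then show "- h (u *\<^sub>R x + v *\<^sub>R y) \<le> u * - h x + v * - h y" using h_conc[of x y u] xy uv(1) by simp
  qed (simp add: convex_real_interval)
  show "strict_mono_on {0..1} h" unfolding strict_mono_on_def
  proof (intro allI impI)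
    fix a b :: real assume ab: "a \<in> {0..1} \<and> b \<in> {0..1} \<and> a < b"
    define u where "u = (1-b)/(1-a)"
    have u: "0 \<le> u" "u < 1" using ab unfolding u_def by (auto simp: field_simps)
    have "u * h a + (1-u) * h 1 \<le> h (u*a + (1-u)*1)" using ab u by (intro h_conc) auto
    moreover have "u*a + (1-u)*1 = b"
    proof -
      have "u*(1-a) = 1 - b" using ab unfolding u_def by simp
      thus ?thesis by (simp add: algebra_simps)
    qed
    moreover have "h a < 1" using h_lt1 ab by auto
    moreover have "h a = u * h a + (1-u) * h a" by (simp add: algebra_simps)
    moreover have "(1-u) * h a < (1-u) * 1" using u \<open>h a < 1\<close> by (intro mult_strict_left_mono) auto
    ultimately show "h a < h b" by (simp add: h_1)
  qed
  show "mono_on {0<..1} R" unfolding mono_on_def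
  proof (intro allI impI)
    fix a b :: real assume ab: "a \<in> {0<..1} \<and> b \<in> {0<..1} \<and> a \<le> b"
    have "g a \<le> (a/b) * g b" using g_ratio ab by auto
    thus "R a \<le> R b" using ab by (simp add: R_eq field_simps)
  qed
  show "strict_mono_on {dc..1} R" unfolding strict_mono_on_def
  proof (intro allI impI)
    fix a b :: real assume ab: "a \<in> {dc..1} \<and> b \<in> {dc..1} \<and> a < b"
    have a0: "0 < a" using ab dcpos by auto
    have gb: "0 < g b" using g_pos ab by auto
    have "g a \<le> ((a-dc)/(b-dc)) * g b" using g_ratio2 ab by auto
    hence "g a / a \<le> (((a-dc)/(b-dc)) * g b) / a" using a0 by (intro divide_right_mono) auto
    also have "\<dots> = ((a-dc)/(a*(b-dc))) * g b" by simp
    also have "\<dots> < (1/b) * g b"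
    proof (rule mult_strict_right_mono[OF _ gb])
      have "(a-dc)*b < a*(b-dc)" using ab dcpos by (simp add: algebra_simps)
      thus "(a-dc)/(a*(b-dc)) < 1/b" using ab a0 by (simp add: field_simps)
    qed
    finally show "R a < R b" using ab a0 by (simp add: R_eq)
  qed
  show "strict_mono_on {0<..1} R'" unfolding strict_mono_on_def
  proof (intro allI impI)
    fix a b :: real assume ab: "a \<in> {0<..1} \<and> b \<in> {0<..1} \<and> a < b"
    have ha: "0 < h a" "0 < h b" using h_pos ab by auto
    have "(a/b) * h b + (1-a/b) * h 0 \<le> h a" using h_ratio ab by auto
    moreover have "0 < (1-a/b) * h 0" using ab h_0 dcpos by (intro mult_pos_pos) auto
    ultimately have "(a/b) * h b < h a" by linarith
    hence "a / h a < b / h b" using ha ab by (simp add: field_simps)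
    thus "R' a < R' b" using ab by (simp add: R'_eq)
  qed
qed

end


definition ip :: "nat \<Rightarrow> (nat \<Rightarrow> complex) \<Rightarrow> (nat \<Rightarrow> complex) \<Rightarrow> complex" where
  "ip D u v = (\<Sum>x<D. cnj (u x) * v x)"
definition ap :: "complex mat \<Rightarrow> nat \<Rightarrow> (nat \<Rightarrow> complex) \<Rightarrow> nat \<Rightarrow> complex" where
  "ap A D u x = (\<Sum>y<D. A $$ (x,y) * u y)"
definition orthonormal :: "nat \<Rightarrow> nat \<Rightarrow> (nat \<Rightarrow> nat \<Rightarrow> complex) \<Rightarrow> bool" where
  "orthonormal D m u \<longleftrightarrow> (\<forall>j<m. \<forall>k<m. ip D (u j) (u k) = (if j = k then 1 else 0))"
definition complete :: "nat \<Rightarrow> nat \<Rightarrow> (nat \<Rightarrow> nat \<Rightarrow> complex) \<Rightarrow> bool" where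
  "complete D m u \<longleftrightarrow> (\<forall>x<D. \<forall>y<D. (\<Sum>j<m. u j x * cnj (u j y)) = (if x = y then 1 else 0))"

lemma ip_cnj: "cnj (ip D u v) = ip D v u"
  unfolding ip_def by (simp add: mult.commute)

lemma ip_sum_right: "ip D u (\<lambda>x. \<Sum>j\<in>J. c j * v j x) = (\<Sum>j\<in>J. c j * ip D u (v j))"
  unfolding ip_def by (simp add: sum_distrib_left sum_distrib_right mult_ac sum.swap[of _ J])

lemma ip_sum_left: "ip D (\<lambda>x. \<Sum>j\<in>J. c j * v j x) u = (\<Sum>j\<in>J. cnj (c j) * ip D (v j) u)"
proof -
  have "ip D (\<lambda>x. \<Sum>j\<in>J. c j * v j x) u = cnj (ip D u (\<lambda>x. \<Sum>j\<in>J. c j * v j x))"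
    by (simp add: ip_cnj)
  also have "\<dots> = (\<Sum>j\<in>J. cnj (c j) * ip D (v j) u)" by (simp add: ip_sum_right ip_cnj)
  finally show ?thesis .
qed

lemma ip_scale_right: "ip D u (\<lambda>x. c * v x) = c * ip D u v"
  unfolding ip_def by (simp add: sum_distrib_left mult_ac)
lemma ip_scale_left: "ip D (\<lambda>x. c * u x) v = cnj c * ip D u v"
  unfolding ip_def by (simp add: sum_distrib_left mult_ac)

lemma ip_cong: "(\<And>x. x < D \<Longrightarrow> u x = u' x) \<Longrightarrow> (\<And>x. x < D \<Longrightarrow> v x = v' x) \<Longrightarrow> ip D u v = ip D u' v'"
  unfolding ip_def by (intro sum.cong) auto

lemma ip_self: "ip D w w = complex_of_real (\<Sum>y<D. (cmod (w y))^2)"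
  unfolding ip_def of_real_sum complex_norm_square by (rule sum.cong) (auto simp: mult.commute)

lemma ip_self_nz: fixes D :: nat assumes "x < D" "w x \<noteq> 0" shows "0 < (\<Sum>y<D. (cmod (w y))^2)"
proof -
  have "(cmod (w x))^2 \<le> (\<Sum>y<D. (cmod (w y))^2)"
    using assms by (intro member_le_sum) auto
  moreover have "0 < (cmod (w x))^2" using assms by simp
  ultimately show ?thesis by linarith
qed

lemma ip_orth_sum: assumes "orthonormal D m u" "k < m"
  shows "ip D (u k) (\<lambda>x. \<Sum>j<m. c j * u j x) = c k"
proof -
  have "ip D (u k) (\<lambda>x. \<Sum>j<m. c j * u j x) = (\<Sum>j<m. c j * ip D (u k) (u j))" by (rule ip_sum_right)
  also have "\<dots> = (\<Sum>j<m. if j = k then c j else 0)"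
    using assms unfolding orthonormal_def by (intro sum.cong) auto
  also have "\<dots> = c k" using assms by simp
  finally show ?thesis .
qed

lemma expansion: assumes "complete D m u" "x < D"
  shows "(\<Sum>j<m. ip D (u j) z * u j x) = z x"
proof -
  have "(\<Sum>j<m. ip D (u j) z * u j x) = (\<Sum>y<D. z y * (\<Sum>j<m. u j x * cnj (u j y)))"
    unfolding ip_def by (simp add: sum_distrib_left sum_distrib_right mult_ac sum.swap[of _ "{..<m}"])
  also have "\<dots> = (\<Sum>y<D. if y = x then z y else 0)"
    using assms unfolding complete_def by (intro sum.cong) auto
  also have "\<dots> = z x" using assms by simp
  finally show ?thesis .
qed

lemma ip_diff: "ip D (\<lambda>y. a y - b y) (\<lambda>y. c y - d y) = ip D a c - ip D a d - ip D b c + ip D b d"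
  unfolding ip_def by (simp add: algebra_simps sum_subtractf sum.distrib)

lemma bessel: assumes "orthonormal D m u" "x < D"
  shows "(\<Sum>j<m. (cmod (u j x))^2) \<le> 1"
proof -
  define e where "e = (\<lambda>y::nat. if y = x then (1::complex) else 0)"
  define S where "S = (\<lambda>y. \<Sum>j<m. cnj (u j x) * u j y)"
  define s where "s = (\<Sum>j<m. u j x * cnj (u j x))"
  have sr: "s = complex_of_real (\<Sum>j<m. (cmod (u j x))^2)"
    unfolding s_def of_real_sum complex_norm_square ..
  have ee: "ip D e e = 1"
  proof -
    have "ip D e e = (\<Sum>y<D. if y = x then 1 else 0)" unfolding ip_def e_def by (rule sum.cong) auto
    thus ?thesis using assms by simp
  qed
  have eS: "ip D e S = s"
  proof -
    have "ip D e S = (\<Sum>y<D. if y = x then S y else 0)" unfolding ip_def e_def by (rule sum.cong) auto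
    also have "\<dots> = S x" using assms by simp
    finally show ?thesis unfolding S_def s_def by (simp add: mult.commute)
  qed
  have Se: "ip D S e = cnj s" using eS ip_cnj[of D e S] by simp
  have SS: "ip D S S = s"
  proof -
    have "ip D S S = (\<Sum>j<m. cnj (cnj (u j x)) * ip D (u j) S)" unfolding S_def[of] by (rule ip_sum_left)
    also have "\<dots> = (\<Sum>j<m. u j x * cnj (u j x))"
      using ip_orth_sum[OF assms(1)] unfolding S_def by (intro sum.cong) auto
    finally show ?thesis unfolding s_def .
  qed
  have "ip D (\<lambda>y. e y - S y) (\<lambda>y. e y - S y) = 1 - cnj s"
    unfolding ip_diff ee eS Se SS by simp
  moreover have "0 \<le> Re (ip D (\<lambda>y. e y - S y) (\<lambda>y. e y - S y))"
    unfolding ip_self by (simp add: sum_nonneg)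
  ultimately show ?thesis unfolding sr by simp
qed

lemma orthonormal_len: assumes "orthonormal D m u" shows "m \<le> D"
proof -
  have "real m = (\<Sum>j<m. Re (ip D (u j) (u j)))" using assms unfolding orthonormal_def by simp
  also have "\<dots> = (\<Sum>j<m. \<Sum>x<D. (cmod (u j x))^2)" unfolding ip_self by simp
  also have "\<dots> = (\<Sum>x<D. \<Sum>j<m. (cmod (u j x))^2)" by (rule sum.swap)
  also have "\<dots> \<le> (\<Sum>x<D. 1)" using bessel[OF assms] by (intro sum_mono) auto
  finally show ?thesis by simp
qed

lemma orthonormal_extend:
  assumes "orthonormal D m u" "\<And>k. k < m \<Longrightarrow> ip D (u k) v = 0" "ip D v v = 1"
  shows "orthonormal D (Suc m) (u(m:=v))"
  unfolding orthonormal_def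
proof (intro allI impI)
  fix j k assume jk: "j < Suc m" "k < Suc m"
  show "ip D ((u(m := v)) j) ((u(m := v)) k) = (if j = k then 1 else 0)"
  proof (cases "j = m"; cases "k = m")
    assume "j = m" "k \<noteq> m" thus ?thesis using jk assms(2)[of k] ip_cnj[of D "u k" v] by simp
  next
    assume "j \<noteq> m" "k = m" thus ?thesis using jk assms(2)[of j] by simp
  next
    assume "j \<noteq> m" "k \<noteq> m" thus ?thesis using jk assms(1) unfolding orthonormal_def by simp
  qed (use assms(3) in simp)
qed

lemma normalize_vec: assumes "x < D" "w x \<noteq> 0"
  shows "\<exists>c. ip D (\<lambda>z. c * w z) (\<lambda>z. c * w z) = 1"
proof -
  define r where "r = (\<Sum>y<D. (cmod (w y))^2)"
  have r: "0 < r" unfolding r_def by (rule ip_self_nz[of x D w, OF assms])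
  define c where "c = complex_of_real (1 / sqrt r)"
  have "ip D (\<lambda>z. c * w z) (\<lambda>z. c * w z) = cnj c * c * ip D w w"
    by (simp add: ip_scale_left ip_scale_right)
  also have "\<dots> = complex_of_real ((1/sqrt r) * (1/sqrt r) * r)"
  proof -
    have iw: "ip D w w = complex_of_real r" unfolding r_def by (rule ip_self)
    show ?thesis unfolding iw c_def by (simp only: complex_cnj_complex_of_real of_real_mult)
  qed
  also have "(1/sqrt r) * (1/sqrt r) * r = 1"
  proof -
    have "sqrt r * sqrt r = r" using r by simp
    thus ?thesis using r by (simp add: field_simps)
  qed
  finally show ?thesis by auto
qed

lemma ext_one: assumes "orthonormal D m u" "\<not> complete D m u"
  shows "\<exists>v. orthonormal D (Suc m) (u(m:=v))"
proof -
  obtain x y where xy: "x < D" "y < D" "(\<Sum>j<m. u j x * cnj (u j y)) \<noteq> (if x = y then 1 else 0)"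
    using assms(2) unfolding complete_def by auto
  define w where "w = (\<lambda>z. (if z = y then 1 else 0) - (\<Sum>j<m. cnj (u j y) * u j z))"
  have wx: "w x \<noteq> 0" using xy unfolding w_def by (auto simp: mult.commute)
  have orth: "ip D (u k) w = 0" if "k < m" for k
  proof -
    have "ip D (u k) w = ip D (u k) (\<lambda>z. if z = y then 1 else 0) - ip D (u k) (\<lambda>z. \<Sum>j<m. cnj (u j y) * u j z)"
      unfolding w_def ip_def by (simp add: algebra_simps sum_subtractf)
    also have "ip D (u k) (\<lambda>z. if z = y then 1 else 0) = cnj (u k y)"
      unfolding ip_def using xy by (simp add: if_distrib cong: if_cong)
    also have "ip D (u k) (\<lambda>z. \<Sum>j<m. cnj (u j y) * u j z) = cnj (u k y)"
      by (rule ip_orth_sum[OF assms(1) that])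
    finally show ?thesis by simp
  qed
  obtain c where c: "ip D (\<lambda>z. c * w z) (\<lambda>z. c * w z) = 1" using normalize_vec[of x D w, OF xy(1) wx] by auto
  have "orthonormal D (Suc m) (u(m:=(\<lambda>z. c * w z)))"
    by (rule orthonormal_extend[OF assms(1) _ c]) (simp add: ip_scale_right orth)
  thus ?thesis by blast
qed

lemma max_ext:
  assumes P: "\<And>m u. P m u \<Longrightarrow> orthonormal D m u"
    and P0: "P m0 u0"
    and step: "\<And>m u. P m u \<Longrightarrow> \<not> complete D m u \<Longrightarrow> \<exists>v. P (Suc m) (u(m:=v))"
  shows "\<exists>m u. P m u \<and> complete D m u"
proof -
  have "\<forall>m u. P m u \<longrightarrow> D - m \<le> k \<longrightarrow> (\<exists>m u. P m u \<and> complete D m u)" for k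
  proof (induction k)
    case 0
    show ?case
    proof (intro allI impI)
      fix m u assume a: "P m u" "D - m \<le> 0"
      show "\<exists>m u. P m u \<and> complete D m u"
      proof (rule ccontr)
        assume "\<not> ?thesis"
        hence "\<not> complete D m u" using a by auto
        then obtain v where "P (Suc m) (u(m:=v))" using step a by blast
        from orthonormal_len[OF P[OF this]] a show False by simp
      qed
    qed
  next
    case (Suc k)
    show ?case
    proof (intro allI impI)
      fix m u assume a: "P m u" "D - m \<le> Suc k"
      show "\<exists>m u. P m u \<and> complete D m u"
      proof (cases "complete D m u")
        case True thus ?thesis using a by auto
      next
        case False
        then obtain v where v: "P (Suc m) (u(m:=v))" using step a by blast
        from orthonormal_len[OF P[OF this]] have "Suc m \<le> D" .
        hence "D - Suc m \<le> k" using a by simp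
        thus ?thesis using Suc.IH v by blast
      qed
    qed
  qed
  thus ?thesis using P0 by blast
qed

lemma onb_complete: assumes "orthonormal D m u"
  shows "\<exists>m' u'. m \<le> m' \<and> (\<forall>j<m. u' j = u j) \<and> orthonormal D m' u' \<and> complete D m' u'"
proof -
  let ?P = "\<lambda>m' u'. orthonormal D m' u' \<and> m \<le> m' \<and> (\<forall>j<m. u' j = u j)"
  have "\<exists>m' u'. ?P m' u' \<and> complete D m' u'"
  proof (rule max_ext[of ?P])
    fix m' u' assume "?P m' u'" "\<not> complete D m' u'"
    then obtain v where "orthonormal D (Suc m') (u'(m':=v))" using ext_one by blast
    thus "\<exists>v. ?P (Suc m') (u'(m':=v))" using \<open>?P m' u'\<close> by (intro exI[of _ v]) auto
  qed (use assms in auto)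
  thus ?thesis by blast
qed


lemma ap_sum: "ap A D (\<lambda>z. \<Sum>j\<in>J. c j * v j z) x = (\<Sum>j\<in>J. c j * ap A D (v j) x)"
  unfolding ap_def by (simp add: sum_distrib_left mult_ac sum.swap[of _ J])

lemma ap_scale: "ap A D (\<lambda>z. c * w z) x = c * ap A D w x"
  unfolding ap_def by (simp add: sum_distrib_left mult_ac)

lemma ap_cong: "(\<And>y. y < D \<Longrightarrow> u y = u' y) \<Longrightarrow> ap A D u x = ap A D u' x"
  unfolding ap_def by (intro sum.cong) auto

lemma ip_herm: assumes herm: "\<And>x y. x < D \<Longrightarrow> y < D \<Longrightarrow> A $$ (y,x) = cnj (A $$ (x,y))"
  shows "ip D u (ap A D v) = ip D (ap A D u) v"
proof -
  have hc: "cnj (A $$ (y,x)) = A $$ (x,y)" if "x<D" "y<D" for x y using herm[OF that] by simp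
  have "ip D (ap A D u) v = (\<Sum>y<D. \<Sum>x<D. cnj (A $$ (y,x)) * cnj (u x) * v y)"
    unfolding ip_def ap_def by (simp add: sum_distrib_right)
  also have "\<dots> = (\<Sum>y<D. \<Sum>x<D. cnj (u x) * (A $$ (x,y) * v y))"
    by (intro sum.cong refl) (simp add: hc)
  also have "\<dots> = ip D u (ap A D v)"
    unfolding ip_def ap_def sum_distrib_left by (rule sum.swap)
  finally show ?thesis by simp
qed

definition eig :: "complex mat \<Rightarrow> nat \<Rightarrow> (nat \<Rightarrow> complex) \<Rightarrow> bool" where
  "eig A D w \<longleftrightarrow> (\<exists>\<mu>. \<forall>x<D. ap A D w x = \<mu> * w x)"

lemma sum_shift_cc:
  fixes X :: "nat \<Rightarrow> complex"
  assumes "m \<le> m'"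
  shows "(\<Sum>l<m'. (if m \<le> l then c (l - m) else 0) * X l) = (\<Sum>i<m'-m. c i * X (m+i))"
proof -
  have "(\<Sum>l<m'. (if m \<le> l then c (l - m) else 0) * X l)
      = (\<Sum>l\<in>{0..<m}. (if m \<le> l then c (l - m) else 0) * X l) + (\<Sum>l\<in>{m..<m'}. (if m \<le> l then c (l - m) else 0) * X l)"
    unfolding lessThan_atLeast0 by (rule sum.atLeastLessThan_concat[symmetric]) (use assms in auto)
  also have "(\<Sum>l\<in>{0..<m}. (if m \<le> l then c (l - m) else 0) * X l) = 0" by simp
  also have "(\<Sum>l\<in>{m..<m'}. (if m \<le> l then c (l - m) else 0) * X l) = (\<Sum>l\<in>{m..<m'}. c (l - m) * X l)"
    by (intro sum.cong) auto
  also have "\<dots> = (\<Sum>i\<in>{0..<m'-m}. c i * X (m+i))"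
  proof -
    have "{m..<m'} = {0+m..<(m'-m)+m}" using assms by simp
    hence "(\<Sum>l\<in>{m..<m'}. c (l - m) * X l) = (\<Sum>i\<in>{0..<m'-m}. c (i+m-m) * X (i+m))"
      by (simp only: sum.shift_bounds_nat_ivl)
    thus ?thesis by (simp add: add.commute)
  qed
  finally show ?thesis by (simp add: atLeast0LessThan)
qed

lemma eigen_step:
  assumes herm: "\<And>x y. x < D \<Longrightarrow> y < D \<Longrightarrow> A $$ (y,x) = cnj (A $$ (x,y))"
    and on: "orthonormal D m u" and eg: "\<And>j. j < m \<Longrightarrow> eig A D (u j)"
    and nc: "\<not> complete D m u"
  shows "\<exists>v. orthonormal D (Suc m) (u(m:=v)) \<and> eig A D v"
proof -
  obtain m' u' where u': "m \<le> m'" "\<forall>j<m. u' j = u j" "orthonormal D m' u'" "complete D m' u'"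
    using onb_complete[OF on] by blast
  have "m \<noteq> m'"
  proof
    assume "m = m'"
    hence "complete D m u" using u' unfolding complete_def by simp
    thus False using nc by simp
  qed
  hence mm: "m < m'" using u' by simp
  define r where "r = m' - m"
  have r0: "0 < r" using mm unfolding r_def by simp
  define Cm where "Cm = mat r r (\<lambda>(i,l). ip D (u' (m+i)) (ap A D (u' (m+l))))"
  have Cc: "Cm \<in> carrier_mat r r" unfolding Cm_def by simp
  obtain as where as: "char_poly Cm = (\<Prod>a\<leftarrow>as. [:- a, 1:])" "length as = r"
    using char_poly_factorized[OF Cc] by blast
  then obtain a as' where aas: "as = a # as'" using r0 by (cases as) auto
  have "poly (char_poly Cm) a = 0" unfolding as(1) aas by (simp add: poly_prod_list)
  hence "eigenvalue Cm a" using eigenvalue_root_char_poly[OF Cc] by simp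
  then obtain c where c: "c \<in> carrier_vec r" "c \<noteq> 0\<^sub>v r" "Cm *\<^sub>v c = a \<cdot>\<^sub>v c"
    unfolding eigenvalue_def eigenvector_def using Cc by auto
  define cc where "cc = (\<lambda>l. if m \<le> l then c $ (l - m) else 0)"
  define v0 where "v0 = (\<lambda>z. \<Sum>l<m'. cc l * u' l z)"
  have ipv0: "ip D (u' k) v0 = cc k" if "k < m'" for k
    unfolding v0_def by (rule ip_orth_sum[OF u'(3) that])
  obtain i where i: "i < r" "c $ i \<noteq> 0"
    using c(1,2) by (metis carrier_vecD eq_vecI index_zero_vec(1,2))
  have "ip D (u' (m+i)) v0 \<noteq> 0" using ipv0[of "m+i"] i unfolding r_def cc_def by simp
  then obtain x where x: "x < D" "v0 x \<noteq> 0" unfolding ip_def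
    by (metis (no_types, lifting) mult_zero_right sum.neutral lessThan_iff)
  have Av0: "ap A D v0 x = a * v0 x" if "x < D" for x
  proof -
    have coef: "ip D (u' l) (ap A D v0) = a * cc l" if l: "l < m'" for l
    proof (cases "l < m")
      case True
      obtain \<mu> where mu: "\<forall>x<D. ap A D (u l) x = \<mu> * u l x" using eg[OF True] unfolding eig_def by auto
      have "ip D (u' l) (ap A D v0) = ip D (ap A D (u' l)) v0" by (rule ip_herm[OF herm])
      also have "\<dots> = ip D (\<lambda>x. \<mu> * u' l x) v0" using mu u'(2) True by (intro ip_cong) auto
      also have "\<dots> = 0" using ipv0[OF l] True by (simp add: ip_scale_left cc_def)
      finally show ?thesis using True by (simp add: cc_def)
    next
      case False
      define i where "i = l - m"
      have i: "i < r" "l = m + i" using False l unfolding i_def r_def by auto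
      have "ip D (u' l) (ap A D v0) = ip D (u' l) (\<lambda>x. \<Sum>l'<m'. cc l' * ap A D (u' l') x)"
        unfolding v0_def by (intro ip_cong) (simp_all add: ap_sum)
      also have "\<dots> = (\<Sum>l'<m'. cc l' * ip D (u' l) (ap A D (u' l')))" by (rule ip_sum_right)
      also have "\<dots> = (\<Sum>i'<r. c $ i' * ip D (u' (m+i)) (ap A D (u' (m+i'))))"
        unfolding cc_def r_def i(2) by (rule sum_shift_cc[OF u'(1)])
      also have "\<dots> = (Cm *\<^sub>v c) $ i"
        using i c(1) unfolding Cm_def by (simp add: scalar_prod_def atLeast0LessThan mult.commute)
      also have "\<dots> = a * c $ i" using c(3) i c(1) by simp
      finally show ?thesis using i by (simp add: cc_def)
    qed
    have "ap A D v0 x = (\<Sum>l<m'. ip D (u' l) (ap A D v0) * u' l x)"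
      using expansion[OF u'(4) that] by simp
    also have "\<dots> = (\<Sum>l<m'. a * (cc l * u' l x))" using coef by (intro sum.cong) auto
    also have "\<dots> = a * v0 x" unfolding v0_def by (simp add: sum_distrib_left)
    finally show ?thesis .
  qed
  obtain s where s: "ip D (\<lambda>z. s * v0 z) (\<lambda>z. s * v0 z) = 1" using normalize_vec[of x D v0, OF x] by auto
  have orth: "ip D (u k) (\<lambda>z. s * v0 z) = 0" if "k < m" for k
    using ipv0[of k] that mm u'(2) by (simp add: ip_scale_right cc_def)
  have "orthonormal D (Suc m) (u(m:=(\<lambda>z. s * v0 z)))"
    by (rule orthonormal_extend[OF on orth s])
  moreover have "eig A D (\<lambda>z. s * v0 z)" unfolding eig_def
    by (intro exI[of _ a]) (simp add: ap_scale Av0)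
  ultimately show ?thesis by blast
qed

theorem spectral:
  assumes herm: "\<And>x y. x < D \<Longrightarrow> y < D \<Longrightarrow> A $$ (y,x) = cnj (A $$ (x,y))"
  shows "\<exists>M u. orthonormal D M u \<and> complete D M u \<and> (\<forall>j<M. eig A D (u j))"
proof -
  let ?P = "\<lambda>m u. orthonormal D m u \<and> (\<forall>j<m. eig A D (u j))"
  have "\<exists>m u. ?P m u \<and> complete D m u"
  proof (rule max_ext[of ?P])
    fix m u assume a: "?P m u" "\<not> complete D m u"
    then obtain v where v: "orthonormal D (Suc m) (u(m:=v))" "eig A D v"
      using eigen_step[OF herm] by blast
    show "\<exists>v. ?P (Suc m) (u(m:=v))" using v a by (intro exI[of _ v]) auto
  qed (auto simp: orthonormal_def)
  thus ?thesis by blast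
qed


lemma finite_idx[simp]: "finite (idx n D)"
proof -
  have "idx n D = {xs. set xs \<subseteq> {..<D} \<and> length xs = n}" unfolding idx_def by auto
  thus ?thesis using finite_lists_length_eq[of "{..<D}" n] by simp
qed

lemma idx_Suc: "idx (Suc n) D = (\<lambda>(a,j). a @ [j]) ` (idx n D \<times> {..<D})"
proof
  show "idx (Suc n) D \<subseteq> (\<lambda>(a,j). a @ [j]) ` (idx n D \<times> {..<D})"
  proof
    fix xs assume xs: "xs \<in> idx (Suc n) D"
    hence "length xs = Suc n" unfolding idx_def by simp
    then obtain a j where "xs = a @ [j]" by (cases xs rule: rev_exhaust) auto
    thus "xs \<in> (\<lambda>(a,j). a @ [j]) ` (idx n D \<times> {..<D})" using xs unfolding idx_def by force
  qed
qed (auto simp: idx_def)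

lemma inj_snoc: "inj_on (\<lambda>(a,j). a @ [j]) X" by (auto intro!: inj_onI)

lemma prod_sum_idx:
  fixes g :: "nat \<Rightarrow> nat \<Rightarrow> 'c::comm_semiring_1"
  shows "(\<Prod>i<n. \<Sum>j<M. g i j) = (\<Sum>a\<in>idx n M. \<Prod>i<n. g i (a!i))"
proof (induction n)
  case 0
  have "idx 0 M = {[]}" unfolding idx_def by auto
  thus ?case by simp
next
  case (Suc n)
  have "(\<Sum>a\<in>idx (Suc n) M. \<Prod>i<Suc n. g i (a!i))
      = (\<Sum>(a,j)\<in>idx n M \<times> {..<M}. \<Prod>i<Suc n. g i ((a@[j])!i))"
    unfolding idx_Suc by (subst sum.reindex[OF inj_snoc]) (simp add: case_prod_unfold)
  also have "\<dots> = (\<Sum>(a,j)\<in>idx n M \<times> {..<M}. (\<Prod>i<n. g i (a!i)) * g n j)"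
  proof (intro sum.cong refl, clarify)
    fix a j assume a: "a \<in> idx n M"
    hence la: "length a = n" unfolding idx_def by simp
    have "(\<Prod>i<n. g i ((a@[j])!i)) = (\<Prod>i<n. g i (a!i))"
      using la by (intro prod.cong) (auto simp: nth_append)
    moreover have "(a@[j])!n = j" using nth_append_length[of a j] la by simp
    ultimately show "(\<Prod>i<Suc n. g i ((a@[j])!i)) = (\<Prod>i<n. g i (a!i)) * g n j"
      by (simp only: prod.lessThan_Suc)
  qed
  also have "\<dots> = (\<Sum>a\<in>idx n M. \<Prod>i<n. g i (a!i)) * (\<Sum>j<M. g n j)"
    by (simp add: sum.cartesian_product[symmetric] sum_product)
  finally show ?case using Suc by simp
qed

lemma prod_sum_idx2:
  fixes h :: "nat \<Rightarrow> nat \<Rightarrow> nat \<Rightarrow> 'c::comm_semiring_1"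
  shows "(\<Sum>xs\<in>idx n D. \<Sum>ys\<in>idx n D. \<Prod>i<n. h i (xs!i) (ys!i)) = (\<Prod>i<n. \<Sum>x<D. \<Sum>y<D. h i x y)"
proof -
  have "(\<Prod>i<n. \<Sum>x<D. \<Sum>y<D. h i x y) = (\<Sum>xs\<in>idx n D. \<Prod>i<n. \<Sum>y<D. h i (xs!i) y)"
    by (rule prod_sum_idx)
  also have "\<dots> = (\<Sum>xs\<in>idx n D. \<Sum>ys\<in>idx n D. \<Prod>i<n. h i (xs!i) (ys!i))"
    by (intro sum.cong refl prod_sum_idx)
  finally show ?thesis by simp
qed

lemma idx_nth: assumes "xs \<in> idx n D" "i < n" shows "xs!i < D"
proof -
  have "length xs = n" "set xs \<subseteq> {..<D}" using assms(1) unfolding idx_def by auto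
  hence "xs!i \<in> set xs" using assms(2) by simp
  thus ?thesis using \<open>set xs \<subseteq> {..<D}\<close> by auto
qed

lemma idx_len: "xs \<in> idx n D \<Longrightarrow> length xs = n"
  unfolding idx_def by simp

lemma perm_lt: "\<sigma> permutes {..<n} \<Longrightarrow> i < n \<Longrightarrow> \<sigma> i < n"
  by (metis lessThan_iff permutes_in_image)

lemma prod_delta:
  assumes "xs \<in> idx n D" "ys \<in> idx n D"
  shows "(\<Prod>i<n. if xs!i = ys!i then 1 else 0 :: 'c::comm_semiring_1) = (if xs = ys then 1 else 0)"
proof (cases "xs = ys")
  case True thus ?thesis by simp
next
  case False
  have l: "length xs = n" "length ys = n" using assms unfolding idx_def by auto
  then obtain i where i: "i < n" "xs!i \<noteq> ys!i" using False nth_equalityI by metis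
  thus ?thesis using False by (intro trans[OF prod_zero]) auto
qed

definition Uf :: "nat \<Rightarrow> (nat \<Rightarrow> nat \<Rightarrow> complex) \<Rightarrow> nat list \<Rightarrow> nat list \<Rightarrow> complex" where
  "Uf n u a xs = (\<Prod>i<n. u (a!i) (xs!i))"

definition wfn :: "nat \<Rightarrow> nat \<Rightarrow> (nat \<Rightarrow> nat \<Rightarrow> complex) \<Rightarrow> op_n \<Rightarrow> nat list \<Rightarrow> complex" where
  "wfn n D u \<rho> a = (\<Sum>xs\<in>idx n D. \<Sum>ys\<in>idx n D. cnj (Uf n u a xs) * \<rho> xs ys * Uf n u a ys)"

lemma trace_formula:
  assumes K: "\<And>i x y. i < n \<Longrightarrow> x < D \<Longrightarrow> y < D \<Longrightarrow> K i x y = (\<Sum>j<M. \<mu> i j * u j x * cnj (u j y))"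
  shows "(\<Sum>xs\<in>idx n D. \<Sum>ys\<in>idx n D. (\<Prod>i<n. K i (xs!i) (ys!i)) * \<rho> ys xs)
       = (\<Sum>a\<in>idx n M. (\<Prod>i<n. \<mu> i (a!i)) * wfn n D u \<rho> a)"
proof -
  have exp: "(\<Prod>i<n. K i (xs!i) (ys!i)) = (\<Sum>a\<in>idx n M. (\<Prod>i<n. \<mu> i (a!i)) * Uf n u a xs * cnj (Uf n u a ys))"
    if "xs \<in> idx n D" "ys \<in> idx n D" for xs ys
  proof -
    have xy: "\<And>i. i < n \<Longrightarrow> xs!i < D \<and> ys!i < D" using that idx_nth by auto
    have "(\<Prod>i<n. K i (xs!i) (ys!i)) = (\<Prod>i<n. \<Sum>j<M. \<mu> i j * u j (xs!i) * cnj (u j (ys!i)))"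
      using xy K by (intro prod.cong) auto
    also have "\<dots> = (\<Sum>a\<in>idx n M. \<Prod>i<n. \<mu> i (a!i) * u (a!i) (xs!i) * cnj (u (a!i) (ys!i)))"
      by (rule prod_sum_idx)
    also have "\<dots> = (\<Sum>a\<in>idx n M. (\<Prod>i<n. \<mu> i (a!i)) * Uf n u a xs * cnj (Uf n u a ys))"
      unfolding Uf_def by (simp add: prod.distrib cnj_prod)
    finally show ?thesis .
  qed
  have "(\<Sum>xs\<in>idx n D. \<Sum>ys\<in>idx n D. (\<Prod>i<n. K i (xs!i) (ys!i)) * \<rho> ys xs)
      = (\<Sum>xs\<in>idx n D. \<Sum>ys\<in>idx n D. \<Sum>a\<in>idx n M. (\<Prod>i<n. \<mu> i (a!i)) * (Uf n u a xs * cnj (Uf n u a ys) * \<rho> ys xs))"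
    by (intro sum.cong refl) (simp add: exp sum_distrib_right sum_distrib_left mult_ac)
  also have "\<dots> = (\<Sum>a\<in>idx n M. (\<Prod>i<n. \<mu> i (a!i)) * (\<Sum>xs\<in>idx n D. \<Sum>ys\<in>idx n D. Uf n u a xs * cnj (Uf n u a ys) * \<rho> ys xs))"
    by (simp add: sum_distrib_left sum.swap[of _ "idx n M"])
  also have "\<dots> = (\<Sum>a\<in>idx n M. (\<Prod>i<n. \<mu> i (a!i)) * wfn n D u \<rho> a)"
  proof (intro sum.cong refl arg_cong2[where f="(*)"])
    fix a
    show "(\<Sum>xs\<in>idx n D. \<Sum>ys\<in>idx n D. Uf n u a xs * cnj (Uf n u a ys) * \<rho> ys xs) = wfn n D u \<rho> a"
      unfolding wfn_def by (subst sum.swap) (simp add: mult_ac)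
  qed
  finally show ?thesis .
qed

lemma w_nonneg: "density_op n D \<rho> \<Longrightarrow> 0 \<le> Re (wfn n D u \<rho> a)"
  unfolding density_op_def wfn_def by blast

lemma w_sum:
  assumes "density_op n D \<rho>" "complete D M u"
  shows "(\<Sum>a\<in>idx n M. wfn n D u \<rho> a) = 1"
proof -
  have "(\<Sum>xs\<in>idx n D. \<Sum>ys\<in>idx n D. (\<Prod>i<n. (\<lambda>i x y. if x = y then 1 else 0) i (xs!i) (ys!i)) * \<rho> ys xs)
       = (\<Sum>a\<in>idx n M. (\<Prod>i<n. (\<lambda>i j. 1) i (a!i)) * wfn n D u \<rho> a)"
    by (rule trace_formula) (use assms(2) in \<open>auto simp: complete_def\<close>)
  moreover have "(\<Sum>xs\<in>idx n D. \<Sum>ys\<in>idx n D. (\<Prod>i<n. (\<lambda>i x y. if x = y then 1 else 0) i (xs!i) (ys!i)) * \<rho> ys xs)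
      = (\<Sum>xs\<in>idx n D. \<Sum>ys\<in>idx n D. if ys = xs then \<rho> ys xs else 0)"
    by (intro sum.cong refl) (auto simp: prod_delta)
  moreover have "\<dots> = (\<Sum>xs\<in>idx n D. \<rho> xs xs)" by (simp add: sum.delta)
  moreover have "\<dots> = 1" using assms(1) unfolding density_op_def by blast
  ultimately show ?thesis by simp
qed

lemma perm_idx_length[simp]: "length (perm_idx \<sigma> xs) = length xs"
  unfolding perm_idx_def by simp
lemma perm_idx_nth[simp]: "i < length xs \<Longrightarrow> perm_idx \<sigma> xs ! i = xs ! \<sigma> i"
  unfolding perm_idx_def by simp

lemma perm_idx_idx: assumes "\<sigma> permutes {..<n}" "xs \<in> idx n D" shows "perm_idx \<sigma> xs \<in> idx n D"
proof -
  have l: "length xs = n" "set xs \<subseteq> {..<D}" using assms(2) unfolding idx_def by auto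
  have "\<And>i. i < n \<Longrightarrow> \<sigma> i < n" using assms(1) perm_lt by auto
  hence "set (perm_idx \<sigma> xs) \<subseteq> {..<D}" using l unfolding perm_idx_def by (auto simp: nth_mem subset_iff)
  thus ?thesis using l unfolding idx_def by simp
qed

lemma perm_idx_inv: assumes "\<sigma> permutes {..<n}" "length xs = n"
  shows "perm_idx (inv_into UNIV \<sigma>) (perm_idx \<sigma> xs) = xs" "perm_idx \<sigma> (perm_idx (inv_into UNIV \<sigma>) xs) = xs"
proof -
  have i1: "\<And>i. i < n \<Longrightarrow> inv_into UNIV \<sigma> i < n" using permutes_inv[OF assms(1)] perm_lt by auto
  show "perm_idx (inv_into UNIV \<sigma>) (perm_idx \<sigma> xs) = xs"
    by (rule nth_equalityI) (use assms i1 in \<open>auto simp: permutes_inverses\<close>)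
  have i2: "\<And>i. i < n \<Longrightarrow> \<sigma> i < n" using assms(1) perm_lt by auto
  show "perm_idx \<sigma> (perm_idx (inv_into UNIV \<sigma>) xs) = xs"
    by (rule nth_equalityI) (use assms i2 in \<open>auto simp: permutes_inverses\<close>)
qed

lemma Uf_perm: assumes "\<sigma> permutes {..<n}" "length a = n" "length xs = n"
  shows "Uf n u (perm_idx \<sigma> a) xs = Uf n u a (perm_idx (inv_into UNIV \<sigma>) xs)"
proof -
  have i1: "\<And>i. i < n \<Longrightarrow> inv_into UNIV \<sigma> i < n" using permutes_inv[OF assms(1)] perm_lt by auto
  have "Uf n u a (perm_idx (inv_into UNIV \<sigma>) xs) = (\<Prod>i<n. u (a!i) (xs!(inv_into UNIV \<sigma> i)))"
    unfolding Uf_def using assms i1 by (intro prod.cong) auto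
  also have "\<dots> = (\<Prod>i<n. u (a!(\<sigma> i)) (xs!(inv_into UNIV \<sigma> (\<sigma> i))))"
    using prod.permute[OF assms(1), of "\<lambda>i. u (a!i) (xs!(inv_into UNIV \<sigma> i))"] by (simp add: comp_def)
  also have "\<dots> = Uf n u (perm_idx \<sigma> a) xs"
    unfolding Uf_def using assms by (intro prod.cong) (auto simp: permutes_inverses)
  finally show ?thesis by simp
qed

lemma sum_idx_perm: assumes s: "\<sigma> permutes {..<n}"
  shows "(\<Sum>xs\<in>idx n D. F xs) = (\<Sum>xs\<in>idx n D. F (perm_idx \<sigma> xs))"
proof (rule sum.reindex_bij_witness[of _ "perm_idx \<sigma>" "perm_idx (inv_into UNIV \<sigma>)"])
  fix xs assume xs: "xs \<in> idx n D"
  show "perm_idx \<sigma> (perm_idx (inv_into UNIV \<sigma>) xs) = xs" using perm_idx_inv[OF s idx_len[OF xs]] by simp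
  show "perm_idx (inv_into UNIV \<sigma>) xs \<in> idx n D" using perm_idx_idx[OF permutes_inv[OF s] xs] .
  show "F (perm_idx \<sigma> (perm_idx (inv_into UNIV \<sigma>) xs)) = F xs" using perm_idx_inv[OF s idx_len[OF xs]] by simp
next
  fix xs assume xs: "xs \<in> idx n D"
  show "perm_idx (inv_into UNIV \<sigma>) (perm_idx \<sigma> xs) = xs" using perm_idx_inv[OF s idx_len[OF xs]] by simp
  show "perm_idx \<sigma> xs \<in> idx n D" using perm_idx_idx[OF s xs] .
qed

lemma w_perm:
  assumes PI: "perm_invariant n D \<rho>" and s: "\<sigma> permutes {..<n}" and a: "length a = n"
  shows "wfn n D u \<rho> (perm_idx \<sigma> a) = wfn n D u \<rho> a"
proof -
  let ?s' = "inv_into UNIV \<sigma>"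
  have "wfn n D u \<rho> (perm_idx \<sigma> a) = (\<Sum>xs\<in>idx n D. \<Sum>ys\<in>idx n D.
          cnj (Uf n u a (perm_idx ?s' xs)) * \<rho> xs ys * Uf n u a (perm_idx ?s' ys))"
    unfolding wfn_def using Uf_perm[OF s a] idx_len by (intro sum.cong refl) auto
  also have "\<dots> = (\<Sum>xs\<in>idx n D. \<Sum>ys\<in>idx n D.
          cnj (Uf n u a (perm_idx ?s' (perm_idx \<sigma> xs))) * \<rho> (perm_idx \<sigma> xs) (perm_idx \<sigma> ys) * Uf n u a (perm_idx ?s' (perm_idx \<sigma> ys)))"
  proof -
    define H where "H = (\<lambda>xs ys. cnj (Uf n u a (perm_idx ?s' xs)) * \<rho> xs ys * Uf n u a (perm_idx ?s' ys))"
    have "(\<Sum>xs\<in>idx n D. \<Sum>ys\<in>idx n D. H xs ys) = (\<Sum>xs\<in>idx n D. \<Sum>ys\<in>idx n D. H xs (perm_idx \<sigma> ys))"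
      by (intro sum.cong refl sum_idx_perm[OF s])
    also have "\<dots> = (\<Sum>xs\<in>idx n D. \<Sum>ys\<in>idx n D. H (perm_idx \<sigma> xs) (perm_idx \<sigma> ys))"
      by (rule sum_idx_perm[OF s])
    finally show ?thesis unfolding H_def .
  qed
  also have "\<dots> = (\<Sum>xs\<in>idx n D. \<Sum>ys\<in>idx n D.
          cnj (Uf n u a xs) * \<rho> xs ys * Uf n u a ys)"
    using PI s unfolding perm_invariant_def
    by (intro sum.cong refl) (simp add: perm_idx_inv[OF s idx_len])
  finally show ?thesis unfolding wfn_def .
qed


definition Pr :: "nat \<Rightarrow> (nat \<Rightarrow> real) \<Rightarrow> nat \<Rightarrow> nat list \<Rightarrow> real" where
  "Pr N lam j a = (\<Prod>i\<in>{..<Suc N} - {j}. lam (a!i))"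

lemma card_minus_one: "j < Suc N \<Longrightarrow> card ({..<Suc N} - {j}) = N"
  by simp

lemma transpose_bij: assumes "j < Suc N"
  shows "bij_betw (Transposition.transpose j N) {..<N} ({..<Suc N} - {j})"
proof -
  let ?t = "Transposition.transpose j N"
  have "?t permutes {..<Suc N}" using assms by (intro permutes_swap_id) auto
  hence b: "bij_betw ?t {..<Suc N} {..<Suc N}" by (rule permutes_imp_bij)
  have b2: "bij_betw ?t {N} {j}" by (simp add: bij_betw_def)
  have "bij_betw ?t ({..<Suc N} - {N}) ({..<Suc N} - {j})"
    by (rule bij_betw_DiffI[OF b b2]) (use assms in auto)
  moreover have "{..<Suc N} - {N} = {..<N}" by auto
  ultimately show ?thesis by simp
qed

lemma avg_step:
  fixes W :: "nat list \<Rightarrow> real" and lam :: "nat \<Rightarrow> real"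
  assumes Wp: "\<And>\<sigma> a. \<sigma> permutes {..<Suc N} \<Longrightarrow> a \<in> idx (Suc N) M \<Longrightarrow> W (perm_idx \<sigma> a) = W a"
    and j: "j < Suc N"
  shows "(\<Sum>a\<in>idx (Suc N) M. W a * ((\<Prod>i<N. lam (a!i)) * H (a!N)))
       = (\<Sum>a\<in>idx (Suc N) M. W a * (Pr N lam j a * H (a!j)))"
proof -
  let ?t = "Transposition.transpose j N"
  have tp: "?t permutes {..<Suc N}" using j by (intro permutes_swap_id) auto
  have "(\<Sum>a\<in>idx (Suc N) M. W a * ((\<Prod>i<N. lam (a!i)) * H (a!N)))
      = (\<Sum>a\<in>idx (Suc N) M. W (perm_idx ?t a) * ((\<Prod>i<N. lam (perm_idx ?t a!i)) * H (perm_idx ?t a!N)))"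
    by (rule sum_idx_perm[OF tp])
  also have "\<dots> = (\<Sum>a\<in>idx (Suc N) M. W a * (Pr N lam j a * H (a!j)))"
  proof (intro sum.cong refl)
    fix a assume a: "a \<in> idx (Suc N) M"
    have la: "length a = Suc N" using a by (rule idx_len)
    have "(\<Prod>i<N. lam (perm_idx ?t a!i)) = (\<Prod>i<N. lam (a!(?t i)))"
      using la by (intro prod.cong) auto
    also have "\<dots> = Pr N lam j a" unfolding Pr_def
      by (rule prod.reindex_bij_betw[OF transpose_bij[OF j], of "\<lambda>i. lam (a!i)"])
    finally have "(\<Prod>i<N. lam (perm_idx ?t a!i)) = Pr N lam j a" .
    moreover have "perm_idx ?t a ! N = a ! j" using la by simp
    moreover have "W (perm_idx ?t a) = W a" by (rule Wp[OF tp a])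
    ultimately show "W (perm_idx ?t a) * ((\<Prod>i<N. lam (perm_idx ?t a!i)) * H (perm_idx ?t a!N))
        = W a * (Pr N lam j a * H (a!j))" by simp
  qed
  finally show ?thesis .
qed

lemma avg:
  fixes W :: "nat list \<Rightarrow> real" and lam :: "nat \<Rightarrow> real"
  assumes Wp: "\<And>\<sigma> a. \<sigma> permutes {..<Suc N} \<Longrightarrow> a \<in> idx (Suc N) M \<Longrightarrow> W (perm_idx \<sigma> a) = W a"
  shows "real (Suc N) * (\<Sum>a\<in>idx (Suc N) M. W a * ((\<Prod>i<N. lam (a!i)) * H (a!N)))
       = (\<Sum>a\<in>idx (Suc N) M. W a * (\<Sum>j<Suc N. Pr N lam j a * H (a!j)))"
proof -
  have "real (Suc N) * (\<Sum>a\<in>idx (Suc N) M. W a * ((\<Prod>i<N. lam (a!i)) * H (a!N)))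
      = (\<Sum>j<Suc N. (\<Sum>a\<in>idx (Suc N) M. W a * ((\<Prod>i<N. lam (a!i)) * H (a!N))))" by simp
  also have "\<dots> = (\<Sum>j<Suc N. (\<Sum>a\<in>idx (Suc N) M. W a * (Pr N lam j a * H (a!j))))"
    by (intro sum.cong refl avg_step[OF Wp]) auto
  also have "\<dots> = (\<Sum>a\<in>idx (Suc N) M. W a * (\<Sum>j<Suc N. Pr N lam j a * H (a!j)))"
    unfolding sum_distrib_left by (rule sum.swap)
  finally show ?thesis .
qed

context
  fixes N M j0 :: nat and lam :: "nat \<Rightarrow> real" and \<beta> \<mu>0 dc :: real
  assumes lam01: "\<And>j. j < M \<Longrightarrow> 0 \<le> lam j \<and> lam j \<le> 1"
    and lamj0: "lam j0 = 1"
    and lamb: "\<And>j. j < M \<Longrightarrow> j \<noteq> j0 \<Longrightarrow> lam j \<le> \<beta>"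
    and b1: "\<beta> < 1"
    and mu0: "0 < \<mu>0" "\<And>j. j < M \<Longrightarrow> 0 < lam j \<Longrightarrow> \<mu>0 \<le> lam j"
    and dcb: "\<beta>^N \<le> dc"
    and dcz: "\<And>j. j < M \<Longrightarrow> lam j = 0 \<Longrightarrow> 1 / real (Suc N) \<le> dc"
    and N1: "1 \<le> N" and dc0: "0 \<le> dc"
begin

lemma lamA: "a \<in> idx (Suc N) M \<Longrightarrow> i < Suc N \<Longrightarrow> 0 \<le> lam (a!i) \<and> lam (a!i) \<le> 1"
  using lam01 idx_nth by blast

lemma Pr01: "a \<in> idx (Suc N) M \<Longrightarrow> 0 \<le> Pr N lam j a \<and> Pr N lam j a \<le> 1"
  unfolding Pr_def using lamA by (auto intro!: prod_nonneg prod_le_1)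

lemma Pr_factor: assumes a: "a \<in> idx (Suc N) M" and k: "k < Suc N" "k \<noteq> j"
  shows "Pr N lam j a \<le> lam (a!k)"
proof -
  have "Pr N lam j a = lam (a!k) * (\<Prod>i\<in>{..<Suc N} - {j} - {k}. lam (a!i))"
    unfolding Pr_def using k by (subst prod.remove[of _ k]) auto
  also have "\<dots> \<le> lam (a!k) * 1"
    using lamA[OF a] k by (intro mult_left_mono prod_le_1) auto
  finally show ?thesis by simp
qed

lemma Pr_zero: assumes "k < Suc N" "k \<noteq> j" "lam (a!k) = 0" shows "Pr N lam j a = 0"
  unfolding Pr_def using assms by (intro prod_zero) auto

lemma Pr_pos: assumes a: "a \<in> idx (Suc N) M" and j: "j < Suc N" and p: "0 < Pr N lam j a"
  shows "\<mu>0 ^ N \<le> Pr N lam j a"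
proof -
  have nz: "lam (a!i) \<noteq> 0" if "i \<in> {..<Suc N} - {j}" for i
    using p that Pr_zero[of i j a] by auto
  have "(\<Prod>i\<in>{..<Suc N} - {j}. \<mu>0) \<le> Pr N lam j a" unfolding Pr_def
  proof (rule prod_mono)
    fix i assume i: "i \<in> {..<Suc N} - {j}"
    have "a!i < M" using idx_nth[OF a] i by auto
    thus "0 \<le> \<mu>0 \<and> \<mu>0 \<le> lam (a!i)" using mu0 lamA[OF a, of i] nz[OF i] i by force
  qed
  thus ?thesis using j by simp
qed

lemma Pr_beta: assumes a: "a \<in> idx (Suc N) M" and j: "j < Suc N" and nj: "\<forall>i<Suc N. a!i \<noteq> j0"
  shows "Pr N lam j a \<le> \<beta> ^ N"
proof -
  have "Pr N lam j a \<le> (\<Prod>i\<in>{..<Suc N} - {j}. \<beta>)" unfolding Pr_def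
  proof (rule prod_mono)
    fix i assume i: "i \<in> {..<Suc N} - {j}"
    have "a!i < M" using idx_nth[OF a] i by auto
    thus "0 \<le> lam (a!i) \<and> lam (a!i) \<le> \<beta>" using lamA[OF a, of i] lamb nj i by auto
  qed
  thus ?thesis using j by simp
qed

lemma ineqE: assumes a: "a \<in> idx (Suc N) M"
  shows "(\<Sum>j<Suc N. Pr N lam j a) \<le> real (Suc N) * dc + (real (Suc N) / \<mu>0^N) * (\<Sum>j<Suc N. Pr N lam j a * (if a!j = j0 then 1 else 0))"
proof -
  let ?n = "real (Suc N)"
  have SPle: "(\<Sum>j<Suc N. Pr N lam j a) \<le> ?n"
    using sum_mono[of "{..<Suc N}" "\<lambda>j. Pr N lam j a" "\<lambda>j. 1"] Pr01[OF a] by simp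
  have SFnn: "0 \<le> (\<Sum>j<Suc N. Pr N lam j a * (if a!j = j0 then 1 else 0))"
    using Pr01[OF a] by (intro sum_nonneg) auto
  show ?thesis
  proof (cases "\<exists>j<Suc N. a!j = j0 \<and> 0 < Pr N lam j a")
    case True
    then obtain j where j: "j < Suc N" "a!j = j0" "0 < Pr N lam j a" by auto
    have "\<mu>0^N \<le> Pr N lam j a * (if a!j = j0 then 1 else 0)" using Pr_pos[OF a j(1,3)] j by simp
    also have "\<dots> \<le> (\<Sum>j<Suc N. Pr N lam j a * (if a!j = j0 then 1 else 0))"
      using Pr01[OF a] j by (intro member_le_sum) auto
    finally have mS: "\<mu>0^N \<le> (\<Sum>j<Suc N. Pr N lam j a * (if a!j = j0 then 1 else 0))" .
    have "?n = (?n / \<mu>0^N) * \<mu>0^N" using mu0 by simp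
    also have "\<dots> \<le> (?n / \<mu>0^N) * (\<Sum>j<Suc N. Pr N lam j a * (if a!j = j0 then 1 else 0))"
      using mS mu0 by (intro mult_left_mono) auto
    finally have "?n \<le> (?n / \<mu>0^N) * (\<Sum>j<Suc N. Pr N lam j a * (if a!j = j0 then 1 else 0))" .
    thus ?thesis using SPle dc0 by (smt (verit) mult_nonneg_nonneg of_nat_0_le_iff)
  next
    case False
    have F: "Pr N lam j a = 0" if "j < Suc N" "a!j = j0" for j
    proof -
      have "\<not> 0 < Pr N lam j a" using False that by auto
      thus ?thesis using Pr01[OF a, of j] by linarith
    qed
    have "(\<Sum>j<Suc N. Pr N lam j a) \<le> ?n * dc"
    proof (cases "\<exists>j1<Suc N. a!j1 = j0")
      case False
      hence "\<forall>i<Suc N. a!i \<noteq> j0" by auto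
      hence "(\<Sum>j<Suc N. Pr N lam j a) \<le> (\<Sum>j<Suc N. \<beta>^N)"
        using Pr_beta[OF a] by (intro sum_mono) auto
      also have "\<dots> \<le> ?n * dc" using dcb by simp
      finally show ?thesis .
    next
      case True
      then obtain j1 where j1: "j1 < Suc N" "a!j1 = j0" by auto
      have "Pr N lam j1 a = 0" using F j1 by simp
      then obtain i where i: "i \<in> {..<Suc N} - {j1}" "lam (a!i) = 0"
        unfolding Pr_def by (auto simp: prod_zero_iff)
      have aiM: "a!i < M" using idx_nth[OF a] i by auto
      have dcn: "1 / ?n \<le> dc" using dcz[OF aiM i(2)] .
      have "(\<Sum>j<Suc N. Pr N lam j a) = (\<Sum>j<Suc N. if j = i then Pr N lam i a else 0)"
        using i Pr_zero[of i _ a] by (intro sum.cong refl) auto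
      also have "\<dots> = Pr N lam i a" using i by simp
      also have "\<dots> \<le> 1" using Pr01[OF a] by simp
      also have "1 \<le> ?n * dc" using dcn by (simp add: field_simps)
      finally show ?thesis .
    qed
    moreover have "0 \<le> (?n / \<mu>0^N) * (\<Sum>j<Suc N. Pr N lam j a * (if a!j = j0 then 1 else 0))"
      using SFnn mu0 by simp
    ultimately show ?thesis by linarith
  qed
qed

lemma ineqF: assumes a: "a \<in> idx (Suc N) M"
  shows "real (Suc N) - (\<Sum>j<Suc N. Pr N lam j a * (if a!j = j0 then 1 else 0))
       \<le> (real (Suc N) / (1 - \<beta>)) * (real (Suc N) - (\<Sum>j<Suc N. Pr N lam j a))"
proof -
  let ?n = "real (Suc N)"
  show ?thesis
  proof (cases "\<forall>i<Suc N. a!i = j0")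
    case True
    have "Pr N lam j a = 1" for j unfolding Pr_def using True lamj0 by (intro prod.neutral) auto
    thus ?thesis using True by simp
  next
    case False
    then obtain k where k: "k < Suc N" "a!k \<noteq> j0" by auto
    have lk: "lam (a!k) \<le> \<beta>" using lamb idx_nth[OF a k(1)] k by auto
    have "(\<Sum>j<Suc N. Pr N lam j a) \<le> (\<Sum>j<Suc N. if j = k then 1 else \<beta>)"
    proof (rule sum_mono)
      fix j assume j: "j \<in> {..<Suc N}"
      show "Pr N lam j a \<le> (if j = k then 1 else \<beta>)"
        using Pr01[OF a, of j] Pr_factor[OF a k(1), of j] lk by auto
    qed
    also have "\<dots> = 1 + real N * \<beta>"
    proof -
      have "(\<Sum>j<Suc N. if j = k then 1 else \<beta>) = (\<Sum>j<Suc N. \<beta> + (if j = k then 1 - \<beta> else 0))"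
        by (intro sum.cong) auto
      also have "\<dots> = real (Suc N) * \<beta> + (1 - \<beta>)" using k by (simp add: sum.distrib)
      finally show ?thesis by (simp add: algebra_simps)
    qed
    finally have SP: "(\<Sum>j<Suc N. Pr N lam j a) \<le> 1 + real N * \<beta>" .
    have "1 - \<beta> \<le> real N * (1 - \<beta>)" using N1 b1 by simp
    hence gap: "1 - \<beta> \<le> ?n - (\<Sum>j<Suc N. Pr N lam j a)" using SP by (simp add: algebra_simps)
    have SFnn: "0 \<le> (\<Sum>j<Suc N. Pr N lam j a * (if a!j = j0 then 1 else 0))"
      using Pr01[OF a] by (intro sum_nonneg) auto
    have "?n = (?n / (1 - \<beta>)) * (1 - \<beta>)" using b1 by simp
    also have "\<dots> \<le> (?n / (1 - \<beta>)) * (?n - (\<Sum>j<Suc N. Pr N lam j a))"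
      using gap b1 by (intro mult_left_mono) auto
    finally show ?thesis using SFnn by linarith
  qed
qed

theorem classical:
  fixes W :: "nat list \<Rightarrow> real"
  assumes W0: "\<And>a. a \<in> idx (Suc N) M \<Longrightarrow> 0 \<le> W a"
    and W1: "(\<Sum>a\<in>idx (Suc N) M. W a) = 1"
    and Wp: "\<And>\<sigma> a. \<sigma> permutes {..<Suc N} \<Longrightarrow> a \<in> idx (Suc N) M \<Longrightarrow> W (perm_idx \<sigma> a) = W a"
  defines "p \<equiv> (\<Sum>a\<in>idx (Suc N) M. W a * ((\<Prod>i<N. lam (a!i)) * 1))"
    and "f \<equiv> (\<Sum>a\<in>idx (Suc N) M. W a * ((\<Prod>i<N. lam (a!i)) * (if a!N = j0 then 1 else 0)))"
  shows "0 \<le> f" "f \<le> p" "p \<le> 1"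
    "p \<le> dc + (real (Suc N) / \<mu>0^N) * f"
    "1 - f \<le> (real (Suc N) / (1 - \<beta>)) * (1 - p)"
proof -
  have L01: "0 \<le> (\<Prod>i<N. lam (a!i)) \<and> (\<Prod>i<N. lam (a!i)) \<le> 1" if "a \<in> idx (Suc N) M" for a
    using lamA[OF that] by (auto intro!: prod_nonneg prod_le_1)
  show "0 \<le> f" unfolding f_def using W0 L01 by (intro sum_nonneg) auto
  show "f \<le> p" unfolding f_def p_def using W0 L01 by (intro sum_mono mult_left_mono) auto
  have "p \<le> (\<Sum>a\<in>idx (Suc N) M. W a * 1)" unfolding p_def using W0 L01
    by (intro sum_mono mult_left_mono) auto
  thus "p \<le> 1" using W1 by simp
  let ?n = "real (Suc N)"
  define SP where "SP a = (\<Sum>j<Suc N. Pr N lam j a)" for a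
  define SF where "SF a = (\<Sum>j<Suc N. Pr N lam j a * (if a!j = j0 then 1 else 0))" for a
  have np: "?n * p = (\<Sum>a\<in>idx (Suc N) M. W a * SP a)"
    unfolding p_def SP_def using avg[OF Wp, where H="\<lambda>x. 1" and lam=lam] by simp
  have nf: "?n * f = (\<Sum>a\<in>idx (Suc N) M. W a * SF a)"
    unfolding f_def SF_def by (rule avg[OF Wp, where H="\<lambda>x. if x = j0 then 1 else 0"])
  have "?n * p \<le> (\<Sum>a\<in>idx (Suc N) M. W a * (?n * dc + (?n / \<mu>0^N) * SF a))"
    unfolding np SP_def SF_def using ineqE W0 by (intro sum_mono mult_left_mono) auto
  also have "\<dots> = ?n * dc * (\<Sum>a\<in>idx (Suc N) M. W a) + (?n / \<mu>0^N) * (\<Sum>a\<in>idx (Suc N) M. W a * SF a)"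
    by (simp add: algebra_simps sum.distrib sum_distrib_left)
  finally have "?n * p \<le> ?n * dc * 1 + (?n / \<mu>0^N) * (?n * f)" using W1 nf by simp
  hence "?n * p \<le> ?n * (dc + (?n / \<mu>0^N) * f)" by (simp add: algebra_simps)
  thus "p \<le> dc + (?n / \<mu>0^N) * f" by (simp add: mult_le_cancel_left_pos)
  have "(\<Sum>a\<in>idx (Suc N) M. W a * (?n - SF a)) = ?n * (\<Sum>a\<in>idx (Suc N) M. W a) - (\<Sum>a\<in>idx (Suc N) M. W a * SF a)"
    by (simp add: algebra_simps sum_subtractf sum_distrib_left)
  hence "?n - ?n * f = (\<Sum>a\<in>idx (Suc N) M. W a * (?n - SF a))"
    using W1 nf by simp
  also have "\<dots> \<le> (\<Sum>a\<in>idx (Suc N) M. W a * ((?n / (1 - \<beta>)) * (?n - SP a)))"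
    unfolding SP_def SF_def using ineqF W0 by (intro sum_mono mult_left_mono) auto
  also have "\<dots> = (?n / (1 - \<beta>)) * (\<Sum>a\<in>idx (Suc N) M. W a * (?n - SP a))"
    by (simp add: sum_distrib_left mult_ac)
  also have "(\<Sum>a\<in>idx (Suc N) M. W a * (?n - SP a)) = ?n - ?n * p"
  proof -
    have "(\<Sum>a\<in>idx (Suc N) M. W a * (?n - SP a)) = ?n * (\<Sum>a\<in>idx (Suc N) M. W a) - (\<Sum>a\<in>idx (Suc N) M. W a * SP a)"
      by (simp add: algebra_simps sum_subtractf sum_distrib_left)
    thus ?thesis using W1 np by simp
  qed
  finally have fin: "?n - ?n * f \<le> (?n / (1 - \<beta>)) * (?n - ?n * p)" .
  have "?n - ?n * f = ?n * (1 - f)" "?n - ?n * p = ?n * (1 - p)"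
    by (simp_all add: algebra_simps)
  moreover have "(?n / (1 - \<beta>)) * (?n * (1 - p)) = ?n * ((?n / (1 - \<beta>)) * (1 - p))"
    by (rule mult.left_commute)
  ultimately have "?n * (1 - f) \<le> ?n * ((?n / (1 - \<beta>)) * (1 - p))" using fin by simp
  thus "1 - f \<le> (?n / (1 - \<beta>)) * (1 - p)" by (simp only: mult_le_cancel_left_pos of_nat_0_less_iff zero_less_Suc)
qed

end


definition Gf :: "nat \<Rightarrow> (nat \<Rightarrow> nat \<Rightarrow> complex) \<Rightarrow> nat list \<Rightarrow> complex" where
  "Gf n g xs = (\<Prod>i<n. g i (xs!i))"
definition pstate :: "nat \<Rightarrow> (nat \<Rightarrow> nat \<Rightarrow> complex) \<Rightarrow> op_n" where
  "pstate n g = (\<lambda>xs ys. Gf n g xs * cnj (Gf n g ys))"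

lemma pstate_density: assumes "\<And>i. i < n \<Longrightarrow> ip D (g i) (g i) = 1"
  shows "density_op n D (pstate n g)"
  unfolding density_op_def
proof (intro conjI allI ballI)
  fix xs ys show "pstate n g ys xs = cnj (pstate n g xs ys)" unfolding pstate_def by simp
next
  fix v :: "nat list \<Rightarrow> complex"
  define z where "z = (\<Sum>xs\<in>idx n D. cnj (v xs) * Gf n g xs)"
  have "(\<Sum>xs\<in>idx n D. \<Sum>ys\<in>idx n D. cnj (v xs) * pstate n g xs ys * v ys)
      = (\<Sum>xs\<in>idx n D. cnj (v xs) * Gf n g xs) * (\<Sum>ys\<in>idx n D. cnj (Gf n g ys) * v ys)"
    unfolding pstate_def sum_product by (intro sum.cong refl) (simp add: mult_ac)
  also have "(\<Sum>ys\<in>idx n D. cnj (Gf n g ys) * v ys) = cnj z" unfolding z_def by (simp add: mult.commute)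
  finally have "(\<Sum>xs\<in>idx n D. \<Sum>ys\<in>idx n D. cnj (v xs) * pstate n g xs ys * v ys) = z * cnj z"
    unfolding z_def .
  also have "\<dots> = complex_of_real ((cmod z)^2)" by (rule complex_norm_square[symmetric])
  finally show "0 \<le> Re (\<Sum>xs\<in>idx n D. \<Sum>ys\<in>idx n D. cnj (v xs) * pstate n g xs ys * v ys)" by simp
next
  have "(\<Sum>xs\<in>idx n D. pstate n g xs xs) = (\<Sum>xs\<in>idx n D. \<Prod>i<n. g i (xs!i) * cnj (g i (xs!i)))"
    unfolding pstate_def Gf_def by (simp add: prod.distrib cnj_prod)
  also have "\<dots> = (\<Prod>i<n. \<Sum>x<D. g i x * cnj (g i x))" by (rule prod_sum_idx[symmetric])
  also have "\<dots> = (\<Prod>i<n. ip D (g i) (g i))" unfolding ip_def by (simp add: mult.commute)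
  also have "\<dots> = 1" using assms by simp
  finally show "(\<Sum>xs\<in>idx n D. pstate n g xs xs) = 1" .
qed

lemma tensor_last_prod:
  "tensor_last N A B xs ys = (\<Prod>i<Suc N. (if i < N then A $$ (xs!i, ys!i) else B $$ (xs!i, ys!i)))"
  unfolding tensor_last_def by simp

lemma ip_ap_sum: "(\<Sum>x<D. \<Sum>y<D. A $$ (x,y) * (g y * cnj (g x))) = ip D g (ap A D g)"
  unfolding ip_def ap_def by (simp add: sum_distrib_left mult_ac)

lemma pstate_trace:
  "trace_prod (Suc N) D (tensor_last N A B) (pstate (Suc N) g)
     = (\<Prod>i<N. ip D (g i) (ap A D (g i))) * ip D (g N) (ap B D (g N))"
proof -
  let ?K = "\<lambda>i x y. (if i < N then A $$ (x, y) else B $$ (x, y)) * (g i y * cnj (g i x))"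
  have "trace_prod (Suc N) D (tensor_last N A B) (pstate (Suc N) g)
      = (\<Sum>xs\<in>idx (Suc N) D. \<Sum>ys\<in>idx (Suc N) D. \<Prod>i<Suc N. ?K i (xs!i) (ys!i))"
    unfolding trace_prod_def tensor_last_prod pstate_def Gf_def
    by (intro sum.cong refl) (simp add: prod.distrib cnj_prod mult_ac)
  also have "\<dots> = (\<Prod>i<Suc N. \<Sum>x<D. \<Sum>y<D. ?K i x y)" by (rule prod_sum_idx2)
  also have "\<dots> = (\<Prod>i<Suc N. ip D (g i) (ap (if i < N then A else B) D (g i)))"
    by (intro prod.cong refl) (simp add: ip_ap_sum[symmetric] if_distrib)
  also have "\<dots> = (\<Prod>i<N. ip D (g i) (ap A D (g i))) * ip D (g N) (ap B D (g N))"
    by simp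
  finally show ?thesis .
qed

lemma Gf_perm: assumes s: "\<sigma> permutes {..<n}" and l: "length xs = n"
  shows "Gf n g (perm_idx \<sigma> xs) = Gf n (\<lambda>k. g (inv_into UNIV \<sigma> k)) xs"
proof -
  let ?h = "\<lambda>k. g (inv_into UNIV \<sigma> k) (xs!k)"
  have inv: "inv_into UNIV \<sigma> (\<sigma> i) = i" for i using permutes_inverses(2)[OF s] .
  have "Gf n g (perm_idx \<sigma> xs) = (\<Prod>i<n. ?h (\<sigma> i))"
    unfolding Gf_def by (intro prod.cong refl) (simp add: inv l)
  also have "\<dots> = (\<Prod>i<n. ?h i)" by (rule prod.permute[OF s, of ?h, unfolded comp_def, symmetric])
  finally show ?thesis unfolding Gf_def .
qed

lemma pstate_PI: "perm_invariant n D (pstate n (\<lambda>_. v))"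
  unfolding perm_invariant_def pstate_def
proof (intro allI impI ballI)
  fix \<sigma> xs ys assume s: "\<sigma> permutes {..<n}" and xs: "xs \<in> idx n D" and ys: "ys \<in> idx n D"
  show "Gf n (\<lambda>_. v) (perm_idx \<sigma> xs) * cnj (Gf n (\<lambda>_. v) (perm_idx \<sigma> ys)) = Gf n (\<lambda>_. v) xs * cnj (Gf n (\<lambda>_. v) ys)"
    using Gf_perm[OF s idx_len[OF xs], of "\<lambda>_. v"] Gf_perm[OF s idx_len[OF ys], of "\<lambda>_. v"] by simp
qed

lemma sum3_swap: "(\<Sum>x\<in>A. \<Sum>y\<in>B. \<Sum>j\<in>J. F x y j) = (\<Sum>j\<in>J. \<Sum>x\<in>A. \<Sum>y\<in>B. F x y j)"
proof -
  have "(\<Sum>x\<in>A. \<Sum>y\<in>B. \<Sum>j\<in>J. F x y j) = (\<Sum>x\<in>A. \<Sum>j\<in>J. \<Sum>y\<in>B. F x y j)"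
    by (rule sum.cong[OF refl], rule sum.swap)
  also have "\<dots> = (\<Sum>j\<in>J. \<Sum>x\<in>A. \<Sum>y\<in>B. F x y j)" by (rule sum.swap)
  finally show ?thesis .
qed

definition wmix :: "nat \<Rightarrow> (nat \<Rightarrow> real) \<Rightarrow> (nat \<Rightarrow> op_n) \<Rightarrow> op_n" where
  "wmix K c \<rho>s = (\<lambda>xs ys. \<Sum>j<K. complex_of_real (c j) * \<rho>s j xs ys)"

lemma wmix_density:
  assumes c: "\<And>j. j < K \<Longrightarrow> 0 \<le> c j" "(\<Sum>j<K. c j) = 1"
    and d: "\<And>j. j < K \<Longrightarrow> density_op n D (\<rho>s j)"
  shows "density_op n D (wmix K c \<rho>s)"
  unfolding density_op_def
proof (intro conjI allI ballI)
  fix xs ys assume xy: "xs \<in> idx n D" "ys \<in> idx n D"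
  have h: "\<rho>s j ys xs = cnj (\<rho>s j xs ys)" if "j < K" for j
    using d[OF that] xy unfolding density_op_def by blast
  show "wmix K c \<rho>s ys xs = cnj (wmix K c \<rho>s xs ys)"
    unfolding wmix_def cnj_sum by (intro sum.cong refl) (simp add: h)
next
  fix v :: "nat list \<Rightarrow> complex"
  have "(\<Sum>xs\<in>idx n D. \<Sum>ys\<in>idx n D. cnj (v xs) * wmix K c \<rho>s xs ys * v ys)
      = (\<Sum>j<K. complex_of_real (c j) * (\<Sum>xs\<in>idx n D. \<Sum>ys\<in>idx n D. cnj (v xs) * \<rho>s j xs ys * v ys))"
  proof -
    have "(\<Sum>xs\<in>idx n D. \<Sum>ys\<in>idx n D. cnj (v xs) * wmix K c \<rho>s xs ys * v ys)
        = (\<Sum>xs\<in>idx n D. \<Sum>ys\<in>idx n D. \<Sum>j<K. complex_of_real (c j) * (cnj (v xs) * \<rho>s j xs ys * v ys))"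
      unfolding wmix_def by (intro sum.cong refl) (simp add: sum_distrib_left sum_distrib_right mult_ac)
    also have "\<dots> = (\<Sum>j<K. \<Sum>xs\<in>idx n D. \<Sum>ys\<in>idx n D. complex_of_real (c j) * (cnj (v xs) * \<rho>s j xs ys * v ys))"
      by (rule sum3_swap)
    also have "\<dots> = (\<Sum>j<K. complex_of_real (c j) * (\<Sum>xs\<in>idx n D. \<Sum>ys\<in>idx n D. cnj (v xs) * \<rho>s j xs ys * v ys))"
      by (intro sum.cong refl) (simp add: sum_distrib_left)
    finally show ?thesis .
  qed
  hence "Re (\<Sum>xs\<in>idx n D. \<Sum>ys\<in>idx n D. cnj (v xs) * wmix K c \<rho>s xs ys * v ys)
      = (\<Sum>j<K. c j * Re (\<Sum>xs\<in>idx n D. \<Sum>ys\<in>idx n D. cnj (v xs) * \<rho>s j xs ys * v ys))"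
    by simp
  also have "0 \<le> \<dots>"
  proof (intro sum_nonneg mult_nonneg_nonneg)
    fix j assume j: "j \<in> {..<K}"
    show "0 \<le> c j" using c(1) j by simp
    show "0 \<le> Re (\<Sum>xs\<in>idx n D. \<Sum>ys\<in>idx n D. cnj (v xs) * \<rho>s j xs ys * v ys)"
      using d[of j] j unfolding density_op_def by blast
  qed
  finally show "0 \<le> Re (\<Sum>xs\<in>idx n D. \<Sum>ys\<in>idx n D. cnj (v xs) * wmix K c \<rho>s xs ys * v ys)" .
next
  have "(\<Sum>xs\<in>idx n D. wmix K c \<rho>s xs xs) = (\<Sum>j<K. complex_of_real (c j) * (\<Sum>xs\<in>idx n D. \<rho>s j xs xs))"
    unfolding wmix_def sum_distrib_left by (rule sum.swap)
  also have "\<dots> = (\<Sum>j<K. complex_of_real (c j))"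
  proof (intro sum.cong refl)
    fix j assume j: "j \<in> {..<K}"
    have "(\<Sum>xs\<in>idx n D. \<rho>s j xs xs) = 1" using d[of j] j unfolding density_op_def by blast
    thus "complex_of_real (c j) * (\<Sum>xs\<in>idx n D. \<rho>s j xs xs) = complex_of_real (c j)" by simp
  qed
  also have "\<dots> = 1" using c(2) by (metis of_real_1 of_real_sum)
  finally show "(\<Sum>xs\<in>idx n D. wmix K c \<rho>s xs xs) = 1" .
qed

lemma wmix_trace: "trace_prod n D T (wmix K c \<rho>s) = (\<Sum>j<K. complex_of_real (c j) * trace_prod n D T (\<rho>s j))"
proof -
  have "trace_prod n D T (wmix K c \<rho>s) = (\<Sum>xs\<in>idx n D. \<Sum>ys\<in>idx n D. \<Sum>j<K. complex_of_real (c j) * (T xs ys * \<rho>s j ys xs))"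
    unfolding trace_prod_def wmix_def by (intro sum.cong refl) (simp add: sum_distrib_left mult_ac)
  also have "\<dots> = (\<Sum>j<K. \<Sum>xs\<in>idx n D. \<Sum>ys\<in>idx n D. complex_of_real (c j) * (T xs ys * \<rho>s j ys xs))"
    by (rule sum3_swap)
  also have "\<dots> = (\<Sum>j<K. complex_of_real (c j) * trace_prod n D T (\<rho>s j))"
    unfolding trace_prod_def by (intro sum.cong refl) (simp add: sum_distrib_left)
  finally show ?thesis .
qed

lemma wmix_PI: "(\<And>j. j < K \<Longrightarrow> perm_invariant n D (\<rho>s j)) \<Longrightarrow> perm_invariant n D (wmix K c \<rho>s)"
  unfolding perm_invariant_def wmix_def by simp

lemma Wstate_PI:
  fixes z \<psi> :: "nat \<Rightarrow> complex"
  defines "gW \<equiv> (\<lambda>j i. if i = j then z else \<psi>)"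
  shows "perm_invariant n D (wmix n (\<lambda>_. 1 / real n) (\<lambda>j. pstate n (gW j)))"
  unfolding perm_invariant_def
proof (intro allI impI ballI)
  fix \<sigma> xs ys assume s: "\<sigma> permutes {..<n}" and xs: "xs \<in> idx n D" and ys: "ys \<in> idx n D"
  have g: "(\<lambda>k. gW j (inv_into UNIV \<sigma> k)) = gW (\<sigma> j)" for j
    unfolding gW_def using s by (auto simp: permutes_inverses fun_eq_iff)
  have "wmix n (\<lambda>_. 1 / real n) (\<lambda>j. pstate n (gW j)) (perm_idx \<sigma> xs) (perm_idx \<sigma> ys)
      = (\<Sum>j<n. complex_of_real (1 / real n) * pstate n (gW (\<sigma> j)) xs ys)"
    unfolding wmix_def pstate_def using Gf_perm[OF s idx_len[OF xs]] Gf_perm[OF s idx_len[OF ys]] g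
    by simp
  also have "\<dots> = (\<Sum>j<n. complex_of_real (1 / real n) * pstate n (gW j) xs ys)"
    by (rule sum.permute[OF s, of "\<lambda>j. complex_of_real (1 / real n) * pstate n (gW j) xs ys", unfolded comp_def, symmetric])
  finally show "wmix n (\<lambda>_. 1 / real n) (\<lambda>j. pstate n (gW j)) (perm_idx \<sigma> xs) (perm_idx \<sigma> ys)
      = wmix n (\<lambda>_. 1 / real n) (\<lambda>j. pstate n (gW j)) xs ys" unfolding wmix_def .
qed


locale vsetup =
  fixes D N :: nat and \<Omega> :: "complex mat" and \<Psi> :: "complex vec"
  assumes D2: "D \<ge> 2" and unit: "is_unit_vec D \<Psi>" and vo: "verification_operator D \<Omega> \<Psi>" and N1: "N \<ge> 1"
begin

definition "\<psi> = (\<lambda>x. \<Psi> $ x)"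

lemma Psi_carrier: "\<Psi> \<in> carrier_vec D" using unit unfolding is_unit_vec_def by simp
lemma dimPsi[simp]: "dim_vec \<Psi> = D" using Psi_carrier by simp
lemma Psi_vec: "\<Psi> = vec D \<psi>" unfolding \<psi>_def by (rule eq_vecI) (auto)

lemma Omega_carrier: "\<Omega> \<in> carrier_mat D D" using vo unfolding verification_operator_def hermitian_mat_def by simp
lemma dimO[simp]: "dim_row \<Omega> = D" "dim_col \<Omega> = D" using Omega_carrier by auto

lemma herm: "x < D \<Longrightarrow> y < D \<Longrightarrow> \<Omega> $$ (y,x) = cnj (\<Omega> $$ (x,y))"
  using vo unfolding verification_operator_def hermitian_mat_def by blast

lemma mv: "\<Omega> *\<^sub>v vec D g = vec D (ap \<Omega> D g)"
  by (rule eq_vecI) (auto simp: ap_def scalar_prod_def atLeast0LessThan)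

lemma qf: "qform \<Omega> (vec D g) = ip D g (ap \<Omega> D g)"
  unfolding qform_def ip_def ap_def by (simp add: sum_distrib_left mult_ac)

lemma qf1: "qform (1\<^sub>m D) (vec D g) = ip D g g"
proof -
  have "qform (1\<^sub>m D) (vec D g) = (\<Sum>i<D. \<Sum>j<D. if i = j then cnj (g i) * g j else 0)"
    unfolding qform_def by (intro sum.cong refl) auto
  also have "\<dots> = ip D g g" unfolding ip_def by simp
  finally show ?thesis .
qed

lemma bounds: "0 \<le> Re (ip D g (ap \<Omega> D g)) \<and> Re (ip D g (ap \<Omega> D g)) \<le> Re (ip D g g)"
proof -
  have "vec D g \<in> carrier_vec D" by simp
  hence "0 \<le> Re (qform \<Omega> (vec D g)) \<and> Re (qform \<Omega> (vec D g)) \<le> Re (qform (1\<^sub>m D) (vec D g))"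
    using vo unfolding verification_operator_def by blast
  thus ?thesis unfolding qf qf1 .
qed

lemma ap_psi: "x < D \<Longrightarrow> ap \<Omega> D \<psi> x = \<psi> x"
proof -
  assume x: "x < D"
  have "\<Omega> *\<^sub>v \<Psi> = \<Psi>" using vo unfolding verification_operator_def by blast
  hence "vec D (ap \<Omega> D \<psi>) = vec D \<psi>" using mv Psi_vec by metis
  hence "vec D (ap \<Omega> D \<psi>) $ x = vec D \<psi> $ x" by simp
  thus ?thesis using x by simp
qed

lemma ip_psi: "ip D \<psi> \<psi> = 1"
proof -
  have "(\<Sum>i<D. (cmod (\<Psi> $ i))\<^sup>2) = 1" using unit unfolding is_unit_vec_def by blast
  thus ?thesis unfolding ip_self \<psi>_def by simp
qed

lemma nondeg: "(\<And>x. x < D \<Longrightarrow> ap \<Omega> D g x = g x) \<Longrightarrow> \<exists>c. \<forall>x<D. g x = c * \<psi> x"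
proof -
  assume a: "\<And>x. x < D \<Longrightarrow> ap \<Omega> D g x = g x"
  have "\<Omega> *\<^sub>v vec D g = vec D g" unfolding mv by (rule eq_vecI) (auto simp: a)
  moreover have "vec D g \<in> carrier_vec D" by simp
  ultimately obtain c where "vec D g = c \<cdot>\<^sub>v \<Psi>" using vo unfolding verification_operator_def by blast
  hence "\<forall>x<D. vec D g $ x = (c \<cdot>\<^sub>v \<Psi>) $ x" by simp
  thus ?thesis unfolding \<psi>_def by auto
qed

lemma ap_one: "x < D \<Longrightarrow> ap (1\<^sub>m D) D g x = g x"
proof -
  assume x: "x < D"
  have "ap (1\<^sub>m D) D g x = (\<Sum>y<D. if y = x then g y else 0)"
    unfolding ap_def using x by (intro sum.cong refl) auto
  thus ?thesis using x by simp
qed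

lemma ap_proj: "x < D \<Longrightarrow> ap (proj \<Psi>) D g x = \<psi> x * ip D \<psi> g"
  unfolding ap_def ip_def proj_def \<psi>_def by (simp add: sum_distrib_left mult_ac)

lemma ip_one: "ip D g (ap (1\<^sub>m D) D g) = ip D g g"
  by (rule ip_cong) (auto simp: ap_one)

lemma ip_proj: "ip D g (ap (proj \<Psi>) D g) = ip D g \<psi> * ip D \<psi> g"
proof -
  have "ip D g (ap (proj \<Psi>) D g) = ip D g (\<lambda>x. ip D \<psi> g * \<psi> x)"
    by (rule ip_cong) (auto simp: ap_proj mult.commute)
  also have "\<dots> = ip D \<psi> g * ip D g \<psi>" by (rule ip_scale_right)
  finally show ?thesis by (simp only: mult.commute)
qed

lemma spectral_ex: "\<exists>M u. orthonormal D M u \<and> complete D M u \<and> (\<forall>j<M. eig \<Omega> D (u j))"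
  by (rule spectral) (rule herm)

end

locale spec = vsetup +
  fixes M :: nat and u :: "nat \<Rightarrow> nat \<Rightarrow> complex"
  assumes on: "orthonormal D M u" and co: "complete D M u" and eg: "\<And>j. j < M \<Longrightarrow> eig \<Omega> D (u j)"
begin

definition "lam j = Re (ip D (u j) (ap \<Omega> D (u j)))"

lemma uu: "j < M \<Longrightarrow> ip D (u j) (u j) = 1" using on unfolding orthonormal_def by simp

lemma E1: assumes j: "j < M" shows "\<forall>x<D. ap \<Omega> D (u j) x = complex_of_real (lam j) * u j x"
proof -
  obtain \<mu> where mu: "\<forall>x<D. ap \<Omega> D (u j) x = \<mu> * u j x" using eg[OF j] unfolding eig_def by auto
  have i: "ip D (u j) (ap \<Omega> D (u j)) = \<mu>"
  proof -
    have "ip D (u j) (ap \<Omega> D (u j)) = ip D (u j) (\<lambda>x. \<mu> * u j x)" using mu by (intro ip_cong) auto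
    thus ?thesis by (simp add: ip_scale_right uu[OF j])
  qed
  have "cnj \<mu> = \<mu>" unfolding i[symmetric] ip_cnj by (rule ip_herm[symmetric]) (rule herm)
  hence "Im \<mu> = 0" by (metis complex_cnj_cancel_iff complex_cnj_zero_iff Im_complex_div_eq_0 Reals_cnj_iff complex_is_Real_iff)
  hence "\<mu> = complex_of_real (lam j)" unfolding lam_def i by (simp add: complex_eq_iff)
  thus ?thesis using mu by simp
qed

lemma E2: "j < M \<Longrightarrow> 0 \<le> lam j \<and> lam j \<le> 1"
  using bounds[of "u j"] uu unfolding lam_def by simp

lemma E3: assumes "x < D" "y < D" shows "\<Omega> $$ (x,y) = (\<Sum>j<M. complex_of_real (lam j) * u j x * cnj (u j y))"
proof -
  define z where "z = (\<lambda>x. \<Omega> $$ (x,y))"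
  have c: "ip D (u j) z = complex_of_real (lam j) * cnj (u j y)" if j: "j < M" for j
  proof -
    have "ip D (u j) z = cnj (ap \<Omega> D (u j) y)"
    proof -
      have hc: "cnj (\<Omega> $$ (y,x')) = \<Omega> $$ (x',y)" if "x' < D" for x'
        using herm[OF assms(2) that] by simp
      show ?thesis unfolding ip_def ap_def z_def cnj_sum by (intro sum.cong refl) (simp add: hc mult.commute)
    qed
    also have "\<dots> = complex_of_real (lam j) * cnj (u j y)" using E1[OF j] assms(2) by simp
    finally show ?thesis .
  qed
  have "\<Omega> $$ (x,y) = (\<Sum>j<M. ip D (u j) z * u j x)" using expansion[OF co assms(1), of z] unfolding z_def by simp
  also have "\<dots> = (\<Sum>j<M. complex_of_real (lam j) * u j x * cnj (u j y))" using c by (intro sum.cong refl) (simp add: mult_ac)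
  finally show ?thesis .
qed

lemma u_nz: assumes "j < M" shows "vec D (u j) \<noteq> 0\<^sub>v D"
proof
  assume "vec D (u j) = 0\<^sub>v D"
  hence "\<forall>x<D. u j x = 0" by (metis index_vec index_zero_vec(1))
  hence "ip D (u j) (u j) = 0" unfolding ip_def by simp
  thus False using uu[OF assms] by simp
qed

lemma eig_vec: assumes "j < M" shows "eigenvector \<Omega> (vec D (u j)) (complex_of_real (lam j))"
  unfolding eigenvector_def using u_nz[OF assms] E1[OF assms]
  by (auto simp: mv intro!: eq_vecI)

lemma E4: "eigenvalue \<Omega> k \<longleftrightarrow> (\<exists>j<M. k = complex_of_real (lam j))"
proof
  assume "\<exists>j<M. k = complex_of_real (lam j)"
  thus "eigenvalue \<Omega> k" using eig_vec unfolding eigenvalue_def by blast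
next
  assume "eigenvalue \<Omega> k"
  then obtain v where v: "v \<in> carrier_vec D" "v \<noteq> 0\<^sub>v D" "\<Omega> *\<^sub>v v = k \<cdot>\<^sub>v v"
    unfolding eigenvalue_def eigenvector_def by auto
  define g where "g = (\<lambda>x. v $ x)"
  have vg: "v = vec D g" unfolding g_def using v(1) by (intro eq_vecI) auto
  have ag: "ap \<Omega> D g x = k * g x" if "x < D" for x
  proof -
    have "vec D (ap \<Omega> D g) $ x = (k \<cdot>\<^sub>v vec D g) $ x" using v(3) unfolding vg mv by simp
    thus ?thesis using that by simp
  qed
  obtain x where x: "x < D" "g x \<noteq> 0"
  proof (rule ccontr)
    assume "\<not> thesis"
    hence "\<forall>x<D. g x = 0" using that by blast
    hence "v = 0\<^sub>v D" unfolding vg by (intro eq_vecI) auto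
    thus False using v(2) by simp
  qed
  obtain j where j: "j < M" "ip D (u j) g \<noteq> 0"
  proof (rule ccontr)
    assume "\<not> thesis"
    hence "\<forall>j<M. ip D (u j) g = 0" using that by blast
    hence "g x = 0" using expansion[OF co x(1), of g] by simp
    thus False using x by simp
  qed
  have "k * ip D (u j) g = ip D (u j) (ap \<Omega> D g)"
    by (subst ip_cong[of D "u j" "u j" "ap \<Omega> D g" "\<lambda>x. k * g x"]) (simp_all add: ag ip_scale_right)
  also have "\<dots> = ip D (ap \<Omega> D (u j)) g" by (rule ip_herm) (rule herm)
  also have "\<dots> = ip D (\<lambda>x. complex_of_real (lam j) * u j x) g" using E1[OF j(1)] by (intro ip_cong) auto
  also have "\<dots> = complex_of_real (lam j) * ip D (u j) g" by (simp add: ip_scale_left)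
  finally have "k = complex_of_real (lam j)" using j(2) by simp
  thus "\<exists>j<M. k = complex_of_real (lam j)" using j by blast
qed

end


context spec begin

lemma j0_ex: "\<exists>j0<M. ip D (u j0) \<psi> \<noteq> 0"
proof (rule ccontr)
  assume "\<not> ?thesis"
  hence z: "\<forall>j<M. ip D (u j) \<psi> = 0" by auto
  have "\<forall>x<D. \<psi> x = 0" using expansion[OF co, of _ \<psi>] z by simp
  hence "ip D \<psi> \<psi> = 0" unfolding ip_def by simp
  thus False using ip_psi by simp
qed

end

locale spec0 = spec +
  fixes j0 :: nat
  assumes j0: "j0 < M" "ip D (u j0) \<psi> \<noteq> 0"
begin

lemma lam_j0: "lam j0 = 1"
proof -
  have "ip D (u j0) \<psi> = ip D (u j0) (ap \<Omega> D \<psi>)" by (rule ip_cong) (auto simp: ap_psi)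
  also have "\<dots> = ip D (ap \<Omega> D (u j0)) \<psi>" by (rule ip_herm) (rule herm)
  also have "\<dots> = ip D (\<lambda>x. complex_of_real (lam j0) * u j0 x) \<psi>" using E1[OF j0(1)] by (intro ip_cong) auto
  also have "\<dots> = complex_of_real (lam j0) * ip D (u j0) \<psi>" by (simp add: ip_scale_left)
  finally have "complex_of_real (lam j0) = 1" using j0(2) by (metis mult_cancel_right2)
  thus ?thesis by (metis of_real_eq_1_iff)
qed

lemma mult_psi: assumes "j < M" "lam j = 1" shows "\<exists>c. \<forall>x<D. u j x = c * \<psi> x"
  by (rule nondeg) (use E1[OF assms(1)] assms(2) in simp)

lemma c0_ex: "\<exists>c0. c0 \<noteq> 0 \<and> cnj c0 * c0 = 1 \<and> (\<forall>x<D. u j0 x = c0 * \<psi> x)"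
proof -
  obtain c0 where c0: "\<forall>x<D. u j0 x = c0 * \<psi> x" using mult_psi[OF j0(1) lam_j0] by auto
  have "ip D (u j0) \<psi> = cnj c0 * ip D \<psi> \<psi>"
    using c0 by (subst ip_cong[of D "u j0" "\<lambda>x. c0 * \<psi> x" \<psi> \<psi>]) (simp_all add: ip_scale_left)
  hence nz: "c0 \<noteq> 0" using j0(2) ip_psi by auto
  have "ip D (u j0) (u j0) = cnj c0 * c0 * ip D \<psi> \<psi>"
    using c0 by (subst ip_cong[of D "u j0" "\<lambda>x. c0 * \<psi> x" "u j0" "\<lambda>x. c0 * \<psi> x"]) (simp_all add: ip_scale_left ip_scale_right)
  hence "cnj c0 * c0 = 1" using uu[OF j0(1)] ip_psi by simp
  thus ?thesis using nz c0 by blast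
qed

lemma E7: assumes "j < M" "j \<noteq> j0" shows "ip D \<psi> (u j) = 0"
proof -
  obtain c0 where c0: "c0 \<noteq> 0" "\<forall>x<D. u j0 x = c0 * \<psi> x" using c0_ex by auto
  have "ip D (u j0) (u j) = cnj c0 * ip D \<psi> (u j)"
    using c0 by (subst ip_cong[of D "u j0" "\<lambda>x. c0 * \<psi> x" "u j" "u j"]) (simp_all add: ip_scale_left)
  moreover have "ip D (u j0) (u j) = 0" using on assms j0(1) unfolding orthonormal_def by auto
  ultimately show ?thesis using c0 by simp
qed

lemma E5: assumes "j < M" "lam j = 1" shows "j = j0"
proof (rule ccontr)
  assume ne: "j \<noteq> j0"
  obtain c where c: "\<forall>x<D. u j x = c * \<psi> x" using mult_psi[OF assms] by auto
  have "ip D \<psi> (u j) = c * ip D \<psi> \<psi>"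
    using c by (subst ip_cong[of D \<psi> \<psi> "u j" "\<lambda>x. c * \<psi> x"]) (simp_all add: ip_scale_right)
  hence "c = 0" using E7[OF assms(1) ne] ip_psi by simp
  hence "ip D (u j) (u j) = 0" using c unfolding ip_def by simp
  thus False using uu[OF assms(1)] by simp
qed

lemma E6: assumes "x < D" "y < D" shows "\<psi> x * cnj (\<psi> y) = u j0 x * cnj (u j0 y)"
proof -
  obtain c0 where c0: "cnj c0 * c0 = 1" "\<forall>x<D. u j0 x = c0 * \<psi> x" using c0_ex by auto
  have "u j0 x * cnj (u j0 y) = (cnj c0 * c0) * (\<psi> x * cnj (\<psi> y))" using c0(2) assms by (simp add: mult_ac)
  thus ?thesis using c0(1) by simp
qed

lemma j1_ex: "\<exists>j<M. j \<noteq> j0"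
proof (rule ccontr)
  assume "\<not> ?thesis"
  hence all: "\<And>j. j < M \<Longrightarrow> j = j0" by auto
  have "0 = j0" using all[of 0] j0(1) by simp
  moreover have "M = 1"
  proof (rule ccontr)
    assume "M \<noteq> 1"
    hence "1 < M" using j0(1) by simp
    hence "1 = j0" using all[of 1] by simp
    thus False using \<open>0 = j0\<close> by simp
  qed
  ultimately have s: "(\<Sum>j<M. F j) = F j0" for F :: "nat \<Rightarrow> complex" by simp
  have "u j0 0 * cnj (u j0 1) = 0" "u j0 0 * cnj (u j0 0) = 1" "u j0 1 * cnj (u j0 1) = 1"
    using co D2 unfolding complete_def s by auto
  thus False by auto
qed

lemma EV: "{k. eigenvalue \<Omega> k} = (\<lambda>j. complex_of_real (lam j)) ` {..<M}"
  using E4 by auto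

lemma EV1: "{k. eigenvalue \<Omega> k \<and> k \<noteq> 1} = (\<lambda>j. complex_of_real (lam j)) ` ({..<M} - {j0})"
proof -
  have "lam j \<noteq> 1 \<longleftrightarrow> j \<noteq> j0" if "j < M" for j using E5[OF that] lam_j0 by auto
  thus ?thesis using E4 by force
qed

lemma beta_eq: "beta_ev \<Omega> = Max (lam ` ({..<M} - {j0}))"
  unfolding beta_ev_def EV1 by (simp add: image_image)

lemma tau_eq: "tau_ev \<Omega> = Min (lam ` {..<M})"
  unfolding tau_ev_def EV by (simp add: image_image)

lemma beta_ge: "j < M \<Longrightarrow> j \<noteq> j0 \<Longrightarrow> lam j \<le> beta_ev \<Omega>"
  unfolding beta_eq by (intro Max_ge) auto

lemma beta_in: "\<exists>j1<M. j1 \<noteq> j0 \<and> lam j1 = beta_ev \<Omega>"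
proof -
  have "lam ` ({..<M} - {j0}) \<noteq> {}" using j1_ex by auto
  from Max_in[OF _ this] show ?thesis unfolding beta_eq by auto
qed

lemma beta_lt1: "beta_ev \<Omega> < 1"
proof -
  obtain j1 where j1: "j1 < M" "j1 \<noteq> j0" "lam j1 = beta_ev \<Omega>" using beta_in by auto
  have "lam j1 \<noteq> 1" using E5[OF j1(1)] j1(2) by auto
  thus ?thesis using E2[OF j1(1)] j1(3) by simp
qed

lemma beta_ge0: "0 \<le> beta_ev \<Omega>"
  using beta_in E2 by force

lemma tau_le: "j < M \<Longrightarrow> tau_ev \<Omega> \<le> lam j"
  unfolding tau_eq by (intro Min_le) auto

lemma tau_in: "\<exists>j2<M. lam j2 = tau_ev \<Omega>"
proof -
  have "lam ` {..<M} \<noteq> {}" using j0 by auto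
  from Min_in[OF _ this] show ?thesis unfolding tau_eq by auto
qed

lemma dcb: "beta_ev \<Omega> ^ N \<le> delta_c N \<Omega>"
  unfolding delta_c_def by auto

lemma dcz: "j < M \<Longrightarrow> lam j = 0 \<Longrightarrow> 1 / real (Suc N) \<le> delta_c N \<Omega>"
  using tau_le[of j] unfolding delta_c_def by auto

lemma dcpos: "0 < delta_c N \<Omega>"
proof (cases "tau_ev \<Omega> > 0")
  case True
  obtain j1 where j1: "j1 < M" "j1 \<noteq> j0" "lam j1 = beta_ev \<Omega>" using beta_in by auto
  have "0 < beta_ev \<Omega>" using tau_le[OF j1(1)] j1(3) True by simp
  thus ?thesis using True unfolding delta_c_def by simp
next
  case False
  have "0 < 1 / real (N + 1)" by simp
  thus ?thesis using False unfolding delta_c_def by (simp add: less_max_iff_disj)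
qed

definition "mu0 = Min (lam ` {j. j < M \<and> 0 < lam j})"

lemma mu0: "0 < mu0" "j < M \<Longrightarrow> 0 < lam j \<Longrightarrow> mu0 \<le> lam j"
proof -
  have ne: "lam ` {j. j < M \<and> 0 < lam j} \<noteq> {}" using j0 lam_j0 by auto
  have fin: "finite (lam ` {j. j < M \<and> 0 < lam j})" by simp
  have "mu0 \<in> lam ` {j. j < M \<and> 0 < lam j}" using Min_in[OF fin ne] unfolding mu0_def .
  thus "0 < mu0" by auto
  show "j < M \<Longrightarrow> 0 < lam j \<Longrightarrow> mu0 \<le> lam j" unfolding mu0_def by (intro Min_le) auto
qed

lemma trace_gen:
  assumes B: "\<And>x y. x < D \<Longrightarrow> y < D \<Longrightarrow> B $$ (x,y) = (\<Sum>j<M. b j * u j x * cnj (u j y))"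
  shows "trace_prod (Suc N) D (tensor_last N \<Omega> B) \<rho>
       = (\<Sum>a\<in>idx (Suc N) M. (complex_of_real (\<Prod>i<N. lam (a!i)) * b (a!N)) * wfn (Suc N) D u \<rho> a)"
proof -
  let ?K = "\<lambda>i x y. if i < N then \<Omega> $$ (x,y) else B $$ (x,y)"
  let ?mu = "\<lambda>i j. if i < N then complex_of_real (lam j) else b j"
  have "trace_prod (Suc N) D (tensor_last N \<Omega> B) \<rho>
      = (\<Sum>xs\<in>idx (Suc N) D. \<Sum>ys\<in>idx (Suc N) D. (\<Prod>i<Suc N. ?K i (xs!i) (ys!i)) * \<rho> ys xs)"
    by (simp only: trace_prod_def tensor_last_prod)
  also have "\<dots> = (\<Sum>a\<in>idx (Suc N) M. (\<Prod>i<Suc N. ?mu i (a!i)) * wfn (Suc N) D u \<rho> a)"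
  proof (rule trace_formula)
    fix i x y assume "i < Suc N" "x < D" "y < D"
    thus "?K i x y = (\<Sum>j<M. ?mu i j * u j x * cnj (u j y))" using E3 B by (cases "i < N") auto
  qed
  also have "\<dots> = (\<Sum>a\<in>idx (Suc N) M. (complex_of_real (\<Prod>i<N. lam (a!i)) * b (a!N)) * wfn (Suc N) D u \<rho> a)"
  proof (intro sum.cong refl arg_cong2[where f="(*)"])
    fix a
    have "(\<Prod>i<N. ?mu i (a!i)) = (\<Prod>i<N. complex_of_real (lam (a!i)))" by (intro prod.cong) auto
    thus "(\<Prod>i<Suc N. ?mu i (a!i)) = complex_of_real (\<Prod>i<N. lam (a!i)) * b (a!N)"
      by (simp add: of_real_prod)
  qed
  finally show ?thesis .
qed

lemma Re_ofr: "Re (complex_of_real r * z) = r * Re z" by simp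

lemma p_formula: "p_val N \<Omega> \<Psi> \<rho> = (\<Sum>a\<in>idx (Suc N) M. Re (wfn (Suc N) D u \<rho> a) * ((\<Prod>i<N. lam (a!i)) * 1))"
proof -
  define R where "R a = (\<Prod>i<N. lam (a!i))" for a
  have "trace_prod (Suc N) D (tensor_last N \<Omega> (1\<^sub>m D)) \<rho>
       = (\<Sum>a\<in>idx (Suc N) M. (complex_of_real (R a) * 1) * wfn (Suc N) D u \<rho> a)"
    unfolding R_def by (rule trace_gen) (use co in \<open>auto simp: complete_def\<close>)
  hence "p_val N \<Omega> \<Psi> \<rho> = (\<Sum>a\<in>idx (Suc N) M. Re ((complex_of_real (R a) * 1) * wfn (Suc N) D u \<rho> a))"
    unfolding p_val_def by (simp only: Re_sum Suc_eq_plus1[symmetric] dimPsi)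
  also have "\<dots> = (\<Sum>a\<in>idx (Suc N) M. Re (wfn (Suc N) D u \<rho> a) * (R a * 1))"
    by (intro sum.cong refl) (simp add: mult.commute del: of_real_prod)
  finally show ?thesis unfolding R_def .
qed

lemma f_formula: "f_val N \<Omega> \<Psi> \<rho> = (\<Sum>a\<in>idx (Suc N) M. Re (wfn (Suc N) D u \<rho> a) * ((\<Prod>i<N. lam (a!i)) * (if a!N = j0 then 1 else 0)))"
proof -
  have "trace_prod (Suc N) D (tensor_last N \<Omega> (proj \<Psi>)) \<rho>
       = (\<Sum>a\<in>idx (Suc N) M. (complex_of_real (\<Prod>i<N. lam (a!i)) * (\<lambda>j. if j = j0 then 1 else 0) (a!N)) * wfn (Suc N) D u \<rho> a)"
  proof (rule trace_gen)
    fix x y assume xy: "x < D" "y < D"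
    have "proj \<Psi> $$ (x,y) = \<psi> x * cnj (\<psi> y)" using xy unfolding proj_def \<psi>_def by simp
    also have "\<dots> = u j0 x * cnj (u j0 y)" by (rule E6[OF xy])
    also have "\<dots> = (\<Sum>j<M. (if j = j0 then 1 else 0) * u j x * cnj (u j y))"
    proof -
      have "(\<Sum>j<M. (if j = j0 then 1 else 0) * u j x * cnj (u j y)) = (\<Sum>j<M. if j = j0 then u j x * cnj (u j y) else 0)"
        by (intro sum.cong) auto
      thus ?thesis using j0(1) by simp
    qed
    finally show "proj \<Psi> $$ (x,y) = (\<Sum>j<M. (if j = j0 then 1 else 0) * u j x * cnj (u j y))" .
  qed
  hence "f_val N \<Omega> \<Psi> \<rho> = (\<Sum>a\<in>idx (Suc N) M. Re (complex_of_real (\<Prod>i<N. lam (a!i)) * (if a!N = j0 then 1 else 0) * wfn (Suc N) D u \<rho> a))"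
    unfolding f_val_def by (simp only: Re_sum Suc_eq_plus1[symmetric] dimPsi)
  also have "\<dots> = (\<Sum>a\<in>idx (Suc N) M. Re (wfn (Suc N) D u \<rho> a) * ((\<Prod>i<N. lam (a!i)) * (if a!N = j0 then 1 else 0)))"
  proof (intro sum.cong refl)
    fix a
    show "Re (complex_of_real (\<Prod>i<N. lam (a!i)) * (if a!N = j0 then 1 else 0) * wfn (Suc N) D u \<rho> a)
        = Re (wfn (Suc N) D u \<rho> a) * ((\<Prod>i<N. lam (a!i)) * (if a!N = j0 then 1 else 0))"
      by (cases "a!N = j0") (simp_all add: mult.commute del: of_real_prod)
  qed
  finally show ?thesis .
qed

lemma ineqs: assumes r: "\<rho> \<in> PI_states (N+1) (dim_vec \<Psi>)"
  shows "0 \<le> f_val N \<Omega> \<Psi> \<rho>" "f_val N \<Omega> \<Psi> \<rho> \<le> p_val N \<Omega> \<Psi> \<rho>" "p_val N \<Omega> \<Psi> \<rho> \<le> 1"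
    "p_val N \<Omega> \<Psi> \<rho> \<le> delta_c N \<Omega> + (real (Suc N) / mu0^N) * f_val N \<Omega> \<Psi> \<rho>"
    "1 - f_val N \<Omega> \<Psi> \<rho> \<le> (real (Suc N) / (1 - beta_ev \<Omega>)) * (1 - p_val N \<Omega> \<Psi> \<rho>)"
proof -
  have d: "density_op (Suc N) D \<rho>" and pi: "perm_invariant (Suc N) D \<rho>" using r unfolding PI_states_def by auto
  define W where "W a = Re (wfn (Suc N) D u \<rho> a)" for a
  have W0: "\<And>a. a \<in> idx (Suc N) M \<Longrightarrow> 0 \<le> W a" unfolding W_def using w_nonneg[OF d] by blast
  have W1: "(\<Sum>a\<in>idx (Suc N) M. W a) = 1" unfolding W_def using w_sum[OF d co] by (metis Re_sum one_complex.sel(1))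
  have Wp: "\<And>\<sigma> a. \<sigma> permutes {..<Suc N} \<Longrightarrow> a \<in> idx (Suc N) M \<Longrightarrow> W (perm_idx \<sigma> a) = W a"
    unfolding W_def using w_perm[OF pi] idx_len by metis
  have c2: "0 \<le> delta_c N \<Omega>" using dcpos by simp
  note cl = classical[where lam=lam, OF E2 lam_j0 beta_ge beta_lt1 mu0(1) mu0(2) dcb dcz N1 c2 W0 W1 Wp]
  note cl = cl[unfolded W_def p_formula[symmetric] f_formula[symmetric]]
  show "0 \<le> f_val N \<Omega> \<Psi> \<rho>" "f_val N \<Omega> \<Psi> \<rho> \<le> p_val N \<Omega> \<Psi> \<rho>" "p_val N \<Omega> \<Psi> \<rho> \<le> 1"
    "p_val N \<Omega> \<Psi> \<rho> \<le> delta_c N \<Omega> + (real (Suc N) / mu0^N) * f_val N \<Omega> \<Psi> \<rho>"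
    "1 - f_val N \<Omega> \<Psi> \<rho> \<le> (real (Suc N) / (1 - beta_ev \<Omega>)) * (1 - p_val N \<Omega> \<Psi> \<rho>)"
    using cl by auto
qed

end


context spec0 begin

abbreviation "S \<equiv> PI_states (N+1) (dim_vec \<Psi>)"

lemma S_eq: "S = PI_states (Suc N) D" by simp

lemma pv: "p_val N \<Omega> \<Psi> \<rho> = Re (trace_prod (Suc N) D (tensor_last N \<Omega> (1\<^sub>m D)) \<rho>)"
  unfolding p_val_def by simp
lemma fv: "f_val N \<Omega> \<Psi> \<rho> = Re (trace_prod (Suc N) D (tensor_last N \<Omega> (proj \<Psi>)) \<rho>)"
  unfolding f_val_def by simp

lemma mix_ex: assumes x: "x \<in> S" and y: "y \<in> S" and t: "0 \<le> t" "t \<le> 1"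
  shows "\<exists>z\<in>S. p_val N \<Omega> \<Psi> z = t * p_val N \<Omega> \<Psi> x + (1-t) * p_val N \<Omega> \<Psi> y
              \<and> f_val N \<Omega> \<Psi> z = t * f_val N \<Omega> \<Psi> x + (1-t) * f_val N \<Omega> \<Psi> y"
proof -
  define c where "c = (\<lambda>j::nat. if j = 0 then t else 1 - t)"
  define \<rho>s where "\<rho>s = (\<lambda>j::nat. if j = 0 then x else y)"
  have two: "(\<Sum>j<2. F j) = F 0 + F 1" for F :: "nat \<Rightarrow> 'b::comm_monoid_add"
    by (simp add: numeral_2_eq_2)
  have xs: "density_op (Suc N) D x" "perm_invariant (Suc N) D x"
    and ys: "density_op (Suc N) D y" "perm_invariant (Suc N) D y"
    using x y unfolding PI_states_def by auto
  have "density_op (Suc N) D (wmix 2 c \<rho>s)"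
  proof (rule wmix_density)
    show "\<And>j. j < 2 \<Longrightarrow> 0 \<le> c j" using t unfolding c_def by auto
    show "(\<Sum>j<2. c j) = 1" unfolding two c_def by simp
    show "\<And>j. j < 2 \<Longrightarrow> density_op (Suc N) D (\<rho>s j)" unfolding \<rho>s_def using xs ys by auto
  qed
  moreover have "perm_invariant (Suc N) D (wmix 2 c \<rho>s)"
    by (rule wmix_PI) (use xs ys in \<open>auto simp: \<rho>s_def\<close>)
  ultimately have zS: "wmix 2 c \<rho>s \<in> S" unfolding PI_states_def by simp
  have tr: "trace_prod (Suc N) D T (wmix 2 c \<rho>s) = complex_of_real t * trace_prod (Suc N) D T x + complex_of_real (1-t) * trace_prod (Suc N) D T y" for T
    unfolding wmix_trace two c_def \<rho>s_def by simp
  show ?thesis using zS by (intro bexI[of _ "wmix 2 c \<rho>s"] conjI) (simp_all add: pv fv tr)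
qed

lemma ipO_psi: "ip D \<psi> (ap \<Omega> D \<psi>) = 1"
  using ip_psi by (subst ip_cong[of D \<psi> \<psi> "ap \<Omega> D \<psi>" \<psi>]) (simp_all add: ap_psi)

lemma ipO_u: "j < M \<Longrightarrow> ip D (u j) (ap \<Omega> D (u j)) = complex_of_real (lam j)"
  using E1[of j] uu[of j] by (subst ip_cong[of D "u j" "u j" "ap \<Omega> D (u j)" "\<lambda>x. complex_of_real (lam j) * u j x"]) (simp_all add: ip_scale_right)

lemma x1_ex: "\<exists>x1\<in>S. p_val N \<Omega> \<Psi> x1 = 1 \<and> f_val N \<Omega> \<Psi> x1 = 1"
proof (intro bexI conjI)
  let ?x = "pstate (Suc N) (\<lambda>_. \<psi>)"
  show "?x \<in> S" unfolding S_eq PI_states_def using pstate_density[of "Suc N" D "\<lambda>_. \<psi>"] ip_psi pstate_PI by auto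
  show "p_val N \<Omega> \<Psi> ?x = 1" unfolding pv pstate_trace by (simp add: ipO_psi ip_one ip_psi)
  show "f_val N \<Omega> \<Psi> ?x = 1" unfolding fv pstate_trace by (simp add: ipO_psi ip_proj ip_psi)
qed

lemma x0_ex: "\<exists>x0\<in>S. p_val N \<Omega> \<Psi> x0 = delta_c N \<Omega> \<and> f_val N \<Omega> \<Psi> x0 = 0"
proof (cases "tau_ev \<Omega> > 0 \<or> 1 / real (N+1) \<le> beta_ev \<Omega> ^ N")
  case True
  hence dc: "delta_c N \<Omega> = beta_ev \<Omega> ^ N" unfolding delta_c_def by auto
  obtain j1 where j1: "j1 < M" "j1 \<noteq> j0" "lam j1 = beta_ev \<Omega>" using beta_in by auto
  let ?x = "pstate (Suc N) (\<lambda>_. u j1)"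
  show ?thesis
  proof (intro bexI conjI)
    show "?x \<in> S" unfolding S_eq PI_states_def using pstate_density[of "Suc N" D "\<lambda>_. u j1"] uu[OF j1(1)] pstate_PI by auto
    show "p_val N \<Omega> \<Psi> ?x = delta_c N \<Omega>" unfolding pv pstate_trace dc
      by (simp add: ipO_u[OF j1(1)] ip_one uu[OF j1(1)] j1(3))
    show "f_val N \<Omega> \<Psi> ?x = 0" unfolding fv pstate_trace
      by (simp add: ip_proj E7[OF j1(1,2)])
  qed
next
  case False
  hence dc: "delta_c N \<Omega> = 1 / real (Suc N)" unfolding delta_c_def by auto
  obtain j2 where j2: "j2 < M" "lam j2 = tau_ev \<Omega>" using tau_in by auto
  have l0: "lam j2 = 0" using j2 False E2[OF j2(1)] by auto
  have j2n: "j2 \<noteq> j0" using l0 lam_j0 by auto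
  define gW :: "nat \<Rightarrow> nat \<Rightarrow> nat \<Rightarrow> complex" where "gW = (\<lambda>j i. if i = j then u j2 else \<psi>)"
  let ?x = "wmix (Suc N) (\<lambda>_. 1 / real (Suc N)) (\<lambda>j. pstate (Suc N) (gW j))"
  have gn: "ip D (gW j i) (gW j i) = 1" for j i unfolding gW_def using uu[OF j2(1)] ip_psi by auto
  have xS: "?x \<in> S"
  proof -
    have "density_op (Suc N) D ?x"
      by (rule wmix_density) (auto intro: pstate_density gn)
    moreover have "perm_invariant (Suc N) D ?x" unfolding gW_def by (rule Wstate_PI)
    ultimately show ?thesis unfolding S_eq PI_states_def by simp
  qed
  have Tz: "trace_prod (Suc N) D (tensor_last N \<Omega> B) (pstate (Suc N) (gW j)) = 0" if "j < N" for j B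
  proof -
    have "(\<Prod>i<N. ip D (gW j i) (ap \<Omega> D (gW j i))) = 0"
      using that by (intro prod_zero) (auto simp: gW_def ipO_u[OF j2(1)] l0 intro!: bexI[of _ j])
    thus ?thesis unfolding pstate_trace by simp
  qed
  have TN: "trace_prod (Suc N) D (tensor_last N \<Omega> B) (pstate (Suc N) (gW N)) = ip D (u j2) (ap B D (u j2))" for B
  proof -
    have "(\<Prod>i<N. ip D (gW N i) (ap \<Omega> D (gW N i))) = 1"
      by (intro prod.neutral) (auto simp: gW_def ipO_psi)
    thus ?thesis unfolding pstate_trace by (simp add: gW_def)
  qed
  have trx: "trace_prod (Suc N) D (tensor_last N \<Omega> B) ?x = complex_of_real (1 / real (Suc N)) * ip D (u j2) (ap B D (u j2))" for B
    unfolding wmix_trace by (simp add: Tz TN)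
  show ?thesis
  proof (intro bexI[of _ ?x] conjI)
    show "?x \<in> S" by (rule xS)
    show "p_val N \<Omega> \<Psi> ?x = delta_c N \<Omega>" unfolding pv trx dc by (simp add: ip_one uu[OF j2(1)])
    show "f_val N \<Omega> \<Psi> ?x = 0" unfolding fv trx by (simp add: ip_proj E7[OF j2(1) j2n])
  qed
qed

theorem final0:
  shows "convex_on {0..1} (\<lambda>\<delta>. zeta N \<delta> \<Omega> \<Psi>)
       \<and> mono_on {0..1} (\<lambda>\<delta>. zeta N \<delta> \<Omega> \<Psi>)
       \<and> strict_mono_on {delta_c N \<Omega>..1} (\<lambda>\<delta>. zeta N \<delta> \<Omega> \<Psi>)
       \<and> concave_on {0..1} (\<lambda>f. eta N f \<Omega> \<Psi>)
       \<and> strict_mono_on {0..1} (\<lambda>f. eta N f \<Omega> \<Psi>)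
       \<and> mono_on {0<..1} (\<lambda>\<delta>. Fid N \<delta> \<Omega> \<Psi>)
       \<and> strict_mono_on {delta_c N \<Omega>..1} (\<lambda>\<delta>. Fid N \<delta> \<Omega> \<Psi>)
       \<and> strict_mono_on {0<..1} (\<lambda>f. Fid' N f \<Omega> \<Psi>)"
proof -
  obtain x0 where x0: "x0 \<in> S" "p_val N \<Omega> \<Psi> x0 = delta_c N \<Omega>" "f_val N \<Omega> \<Psi> x0 = 0" using x0_ex by auto
  obtain x1 where x1: "x1 \<in> S" "p_val N \<Omega> \<Psi> x1 = 1" "f_val N \<Omega> \<Psi> x1 = 1" using x1_ex by auto
  interpret A: absK S "p_val N \<Omega> \<Psi>" "f_val N \<Omega> \<Psi>" "delta_c N \<Omega>" "real (Suc N) / mu0^N"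
      "real (Suc N) / (1 - beta_ev \<Omega>)" x0 x1
  proof (unfold_locales)
    show "\<And>x y t. x \<in> S \<Longrightarrow> y \<in> S \<Longrightarrow> 0 \<le> t \<Longrightarrow> t \<le> 1 \<Longrightarrow>
      \<exists>z\<in>S. p_val N \<Omega> \<Psi> z = t * p_val N \<Omega> \<Psi> x + (1-t) * p_val N \<Omega> \<Psi> y \<and> f_val N \<Omega> \<Psi> z = t * f_val N \<Omega> \<Psi> x + (1-t) * f_val N \<Omega> \<Psi> y"
      by (rule mix_ex)
    show "\<And>x. x \<in> S \<Longrightarrow> 0 \<le> f_val N \<Omega> \<Psi> x \<and> f_val N \<Omega> \<Psi> x \<le> p_val N \<Omega> \<Psi> x \<and> p_val N \<Omega> \<Psi> x \<le> 1"
      using ineqs by blast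
    show "0 < real (Suc N) / mu0^N" using mu0 by simp
    show "\<And>x. x \<in> S \<Longrightarrow> p_val N \<Omega> \<Psi> x \<le> delta_c N \<Omega> + real (Suc N) / mu0^N * f_val N \<Omega> \<Psi> x"
      using ineqs by blast
    show "0 < real (Suc N) / (1 - beta_ev \<Omega>)" using beta_lt1 by simp
    show "\<And>x. x \<in> S \<Longrightarrow> 1 - f_val N \<Omega> \<Psi> x \<le> real (Suc N) / (1 - beta_ev \<Omega>) * (1 - p_val N \<Omega> \<Psi> x)"
      using ineqs by blast
  qed (use x0 x1 dcpos in auto)
  have e1: "(\<lambda>\<delta>. zeta N \<delta> \<Omega> \<Psi>) = A.g" by (rule ext) (unfold zeta_def A.g_def, rule refl)
  have e2: "(\<lambda>f. eta N f \<Omega> \<Psi>) = A.h" by (rule ext) (unfold eta_def A.h_def, rule refl)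
  have e3: "(\<lambda>\<delta>. Fid N \<delta> \<Omega> \<Psi>) = A.R" by (rule ext) (unfold Fid_def A.R_def, rule refl)
  have e4: "(\<lambda>f. Fid' N f \<Omega> \<Psi>) = A.R'" by (rule ext) (unfold Fid'_def A.R'_def, rule refl)
  show ?thesis unfolding e1 e2 e3 e4 by (rule A.main_abs)
qed

end

theorem lemma3:
  fixes D N :: nat and \<Omega> :: "complex mat" and \<Psi> :: "complex vec"
  assumes "D \<ge> 2" and "is_unit_vec D \<Psi>" and "verification_operator D \<Omega> \<Psi>" and "N \<ge> 1"
  shows "convex_on {0..1} (\<lambda>\<delta>. zeta N \<delta> \<Omega> \<Psi>)
       \<and> mono_on {0..1} (\<lambda>\<delta>. zeta N \<delta> \<Omega> \<Psi>)
       \<and> strict_mono_on {delta_c N \<Omega>..1} (\<lambda>\<delta>. zeta N \<delta> \<Omega> \<Psi>)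
       \<and> concave_on {0..1} (\<lambda>f. eta N f \<Omega> \<Psi>)
       \<and> strict_mono_on {0..1} (\<lambda>f. eta N f \<Omega> \<Psi>)
       \<and> mono_on {0<..1} (\<lambda>\<delta>. Fid N \<delta> \<Omega> \<Psi>)
       \<and> strict_mono_on {delta_c N \<Omega>..1} (\<lambda>\<delta>. Fid N \<delta> \<Omega> \<Psi>)
       \<and> strict_mono_on {0<..1} (\<lambda>f. Fid' N f \<Omega> \<Psi>)"
proof -
  interpret V: vsetup D N \<Omega> \<Psi> using assms by unfold_locales
  obtain M u where Mu: "orthonormal D M u" "complete D M u" "\<forall>j<M. eig \<Omega> D (u j)"
    using V.spectral_ex by blast
  interpret SP: spec D N \<Omega> \<Psi> M u using Mu by unfold_locales auto
  obtain j0 where j0: "j0 < M" "ip D (u j0) V.\<psi> \<noteq> 0" using SP.j0_ex by auto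
  interpret S0: spec0 D N \<Omega> \<Psi> M u j0 using j0 by unfold_locales auto
  show ?thesis by (rule S0.final0)
qed


end
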